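(* For every $(w,x,y,z)\in X\setminus\{(3,3,3,3)\}$, up to conjugation we have $$ A=\rho(\alpha)= \begin{pmatrix} 0 & 0 & 1& 0 \\ 1 & 0 & 0 & 0 \\ 0 & 1 & 0 & 0 \\ 0 & 0 & 0 & 1 \end{pmatrix} \qquad \textrm{ and }\qquad AC=\rho(\alpha\gamma)= \begin{pmatrix} \lambda_1 & 0 & 0 & 0 \\ 0 & \lambda_2 & 0 & 0 \\ 0 & 0 & \lambda_3 & 0 \\ 0 & 0 & 0 & 1 \end{pmatrix} $$ with $\lambda_i\in \mathbb{R}$, $\lambda_i>0$ and $\lambda_1\neq \pm 1$.
   Context: Let $O$ be the hyperbolic 3--orbifold obtained from the one-tetrahedron, two-vertex triangulation of $S^3$ by deleting the vertices and modelling edge neighbourhoods on $\mathbb{R}^3/\langle r\rangle$, $r$ a rotation by $120^\circ$. Writing the ideal simplex as $[v_1,v_2,v_3,v_4]$ with face pairings $\alpha[v_1,v_2,v_3]=[v_1,v_2,v_4]$ and $\beta[v_2,v_3,v_4]=[v_1,v_3,v_4]$, one has $\pi_1^{orb}(O)=\langle \alpha,\beta : \alpha^3=\beta^3=(\alpha\beta\alpha^{-1}\beta^{-1})^3=1\rangle$. Set $\gamma=[\alpha,\beta]=\alpha\beta\alpha^{-1}\beta^{-1}$. Real projective structures on $O$ modelled on a 3--simplex have holonomy $\rho$ with (up to conjugacy) $$A=\rho(\alpha)=\begin{pmatrix} 1 & 0 & 0 & a_1 \\ 0 & 1 & 0 & a_2 \\ 0 & 0 & 0 & -1\\ 0 &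 0 & 1 & -1 \end{pmatrix},\quad B=\rho(\beta)=\begin{pmatrix} -1 & 1 & 0 & 0 \\ -1 & 0 & 0 & 0 \\ b_3 & 0 & 1 & 0\\ b_4 & 0 & 0 & 1 \end{pmatrix},$$ where $(a_1+a_2)(b_3+b_4)=3+a_1a_2b_3b_4$, and $C=ABA^{-1}B^{-1}=\rho(\gamma)$. The parameters are $w=a_1b_4$, $x=a_1b_3$, $y=a_2b_3$, $z=a_2b_4$ (equivalently $w=2+\operatorname{tr}AB$, $x=2+\operatorname{tr}A^{-1}B$, $y=2+\operatorname{tr}A^{-1}B^{-1}$, $z=2+\operatorname{tr}AB^{-1}$). $X$ denotes the connected component, containing $(3,3,3,3)$, of the set of $(w,x,y,z)\in\mathbb{R}^4$ satisfying $w+x+y+z=3+wy$ and $wy=zx$; it is distinguished from the other component by $x>1$ and $z>1$. The point $(3,3,3,3)$ corresponds to the complete hyperbolic structure on $O$. The stabilizer of $v_1$ is generated by $\alpha,\gamma$ (a $(3,3,3)$-turnover group), whose maximal torsion-free subgroup is $\langle\alpha\gamma,\gamma\alpha\rangle\cong\mathbb{Z}^2$. *)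

theory Defs
  imports "HOL-Analysis.Analysis"
begin

definition Xvar :: "(real \<times> real \<times> real \<times> real) set" where
  "Xvar = {(w,x,y,z). w + x + y + z = 3 + w*y \<and> w*y = z*x}"

definition Xcomp :: "(real \<times> real \<times> real \<times> real) set" where
  "Xcomp = connected_component_set Xvar (3,3,3,3)"

text \<open>Holonomy matrices rho(alpha), rho(beta), rho(gamma) = [A,B].\<close>
definition matA :: "real \<Rightarrow> real \<Rightarrow> real^4^4" where
  "matA a1 a2 = vector [vector [1,0,0,a1], vector [0,1,0,a2],
                        vector [0,0,0,-1], vector [0,0,1,-1]]"

definition matB :: "real \<Rightarrow> real \<Rightarrow> real^4^4" where
  "matB b3 b4 = vector [vector [-1,1,0,0], vector [-1,0,0,0],
                        vector [b3,0,1,0], vector [b4,0,0,1]]"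

definition matC :: "real \<Rightarrow> real \<Rightarrow> real \<Rightarrow> real \<Rightarrow> real^4^4" where
  "matC a1 a2 b3 b4 = matA a1 a2 ** matB b3 b4 ** matrix_inv (matA a1 a2) ** matrix_inv (matB b3 b4)"

definition permA :: "real^4^4" where
  "permA = vector [vector [0,0,1,0], vector [1,0,0,0],
                   vector [0,1,0,0], vector [0,0,0,1]]"

definition diag4 :: "real \<Rightarrow> real \<Rightarrow> real \<Rightarrow> real^4^4" where
  "diag4 l1 l2 l3 = vector [vector [l1,0,0,0], vector [0,l2,0,0],
                            vector [0,0,l3,0], vector [0,0,0,1]]"

end

theory Submission
  imports Defs
begin

lemma vector_4 [simp]:
 "(vector [x1,x2,x3,x4] ::('a::zero)^4)$1 = x1"
 "(vector [x1,x2,x3,x4] ::('a::zero)^4)$2 = x2"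
 "(vector [x1,x2,x3,x4] ::('a::zero)^4)$3 = x3"
 "(vector [x1,x2,x3,x4] ::('a::zero)^4)$4 = x4"
  unfolding vector_def by simp_all

lemma mat4_eq: "(M::'a^4^4) = N \<longleftrightarrow> (\<forall>i\<in>{1,2,3,4}. \<forall>j\<in>{1,2,3,4}. M$i$j = N$i$j)"
  by (auto simp: vec_eq_iff forall_4 simp del: One_nat_def)

lemma matrix_inv_eqI:
  fixes A X :: "real^'n^'n"
  assumes "A ** X = mat 1" "X ** A = mat 1"
  shows "matrix_inv A = X"
proof -
  have ex: "\<exists>A'. A ** A' = mat 1 \<and> A' ** A = mat 1" using assms by blast
  define Y where "Y = matrix_inv A"
  have "A ** Y = mat 1 \<and> Y ** A = mat 1"
    unfolding Y_def matrix_inv_def by (rule someI_ex[OF ex])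
  then have "Y = Y ** (A ** X)" using assms by (simp add: matrix_mul_rid)
  also have "\<dots> = (Y ** A) ** X" by (simp add: matrix_mul_assoc)
  also have "\<dots> = X" using \<open>A ** Y = mat 1 \<and> Y ** A = mat 1\<close> by (simp add: matrix_mul_lid)
  finally show ?thesis unfolding Y_def .
qed

lemma invA: "matrix_inv (matA a b) = matA a b ** matA a b"
  by (rule matrix_inv_eqI; simp add: mat4_eq matA_def matrix_matrix_mult_def sum_4 mat_def algebra_simps)

lemma invB: "matrix_inv (matB a b) = matB a b ** matB a b"
  by (rule matrix_inv_eqI; simp add: mat4_eq matB_def matrix_matrix_mult_def sum_4 mat_def algebra_simps)

definition Tm :: "real \<Rightarrow> real \<Rightarrow> real \<Rightarrow> real \<Rightarrow> real^4^4" where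
 "Tm a b c d = vector [
   vector [1, b*c + a*d - 3*a*c + a*a*c*c, b - 2*a + a*a*c, a],
   vector [0, 1 + b*d - 2*b*c - a*c + a*b*c*c, -b - a + a*b*c, b],
   vector [0, -2*d + c + a*c*d - a*c*c, a*d - a*c, -1],
   vector [0, -d + 2*c - a*c*c, 1 - a*c, -1]]"

lemma T_eq: "matA a b ** matC a b c d = Tm a b c d"
  unfolding matC_def invA invB
  by (simp add: mat4_eq matA_def matB_def Tm_def matrix_matrix_mult_def sum_4 algebra_simps)


definition trp :: "real \<Rightarrow> real \<Rightarrow> real \<Rightarrow> real \<Rightarrow> real" where
  "trp a b c d = a*d+b*d-2*a*c-2*b*c+a*b*c^2"
definition s2p :: "real \<Rightarrow> real \<Rightarrow> real \<Rightarrow> real \<Rightarrow> real" where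
  "s2p a b c d = a*c+b*c-2*a*d-2*b*d+a*b*d^2"
definition fpol :: "real \<Rightarrow> real \<Rightarrow> real \<Rightarrow> real \<Rightarrow> real \<Rightarrow> real" where
  "fpol a b c d t = t^3 - trp a b c d * t^2 + s2p a b c d * t - 1"
definition relp :: "real \<Rightarrow> real \<Rightarrow> real \<Rightarrow> real \<Rightarrow> real" where
  "relp a b c d = (a+b)*(c+d) - 3 - a*b*c*d"
definition ellv :: "real \<Rightarrow> real^4 \<Rightarrow> real" where
  "ellv b v = 3 * (v$2) + b * (v$3) + b * (v$4)"
definition q1v :: "real \<Rightarrow> real \<Rightarrow> real \<Rightarrow> real \<Rightarrow> real \<Rightarrow> real^4" where
  "q1v a b c d l = vector [
   (a^2*c^2*l^2 - a^2*d^2*l + b*c*l^2 + a*d*l^2 - 3*a*c*l^2 - 2*b*d*l + 2*b*c*l + 4*a*d*l - 3*a*c*l - b*d + a*d),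
   (a*b*c^2*l^2 - a*b*d^2*l + b*d*l^2 - 2*b*c*l^2 - a*c*l^2 + 2*b*d*l - b*c*l + 2*a*d*l - 2*a*c*l + a*d),
   (a*c*d*l^2 - a*c^2*l^2 + a*c^2*l - 2*d*l^2 + c*l^2 - a*c*d + d*l - 2*c*l + d + c),
   (-a*c^2*l^2 + a*d^2*l + a*c^2*l - d*l^2 + 2*c*l^2 - a*d^2 - d*l - c*l + 2*d - c)]"


lemma Xeqs:
  fixes w x y z :: real
  assumes e1: "w+x+y+z = 3+w*y" and e2: "w*y = z*x"
  shows "z*(w*x-w-x) = w*(w+x-3)" "y*(w*x-w-x) = x*(w+x-3)"
  using assms by algebra+

lemma X_pos:
  fixes w x y z :: real
  assumes e1: "w+x+y+z = 3+w*y" and e2: "w*y = z*x" and x1: "x > 1" and z1: "z > 1"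
  shows "w*x-w-x > 0"
proof (rule ccontr)
  assume "\<not> w*x-w-x > 0"
  hence D: "w*x-w-x \<le> 0" by simp
  note E = Xeqs[OF e1 e2]
  show False
  proof (cases "w*x-w-x = 0")
    case True
    from E(2) True have "x*(w+x-3) = 0" by (metis mult_zero_right)
    then have "x = 0 \<or> w+x-3 = 0" by simp
    then have "w+x-3 = 0" using x1 by auto
    then have "w*x-w-x = -(x*x - 3*x + 3)" by algebra
    moreover have "x*x - 3*x + 3 > 0"
    proof -
      have "4*(x*x-3*x+3) = (2*x-3)^2 + 3" by (simp add: power2_eq_square algebra_simps)
      moreover have "(2*x-3)^2 + 3 > (0::real)" by (simp add: add_nonneg_pos)
      ultimately have "4*(x*x-3*x+3) > 0" by simp
      then show ?thesis by simp
    qed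
    ultimately show False using True by simp
  next
    case False
    then have Dn: "w*x-w-x < 0" using D by simp
    have "z*(w*x-w-x) < 1*(w*x-w-x)" using z1 Dn by (intro mult_strict_right_mono_neg) auto
    then have "w*(w+x-3) < w*x-w-x" using E(1) by simp
    then have "(w-1)*(w-1) + (x-1) < 0" by (simp add: algebra_simps)
    moreover have "(w-1)*(w-1) \<ge> 0" by simp
    ultimately show False using x1 by simp
  qed
qed

lemma X_back:
  fixes w x y z :: real
  assumes e1: "w+x+y+z = 3+w*y" and e2: "w*y = z*x" and x1: "x \<ge> 1" and m: "(w-1)*(x-1) \<ge> 1"
  shows "x > 1 \<and> z > 1"
proof -
  have xg: "x > 1" using x1 m by (cases "x = 1") auto
  note E = Xeqs[OF e1 e2]
  have D0: "w*x-w-x \<ge> 0" using m by (simp add: algebra_simps)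
  have Dp: "w*x-w-x > 0"
  proof (rule ccontr)
    assume "\<not> w*x-w-x > 0"
    hence True: "w*x-w-x = 0" using D0 by simp
    from E(2) True have "x*(w+x-3) = 0" by (metis mult_zero_right)
    then have "x = 0 \<or> w+x-3 = 0" by simp
    then have "w+x-3 = 0" using xg by auto
    then have "w*x-w-x = -(x*x - 3*x + 3)" by algebra
    moreover have "x*x - 3*x + 3 > 0"
    proof -
      have "4*(x*x-3*x+3) = (2*x-3)^2 + 3" by (simp add: power2_eq_square algebra_simps)
      moreover have "(2*x-3)^2 + 3 > (0::real)" by (simp add: add_nonneg_pos)
      ultimately have "4*(x*x-3*x+3) > 0" by simp
      then show ?thesis by simp
    qed
    ultimately show False using True by simp
  qed
  have "w*(w+x-3) - (w*x-w-x) = (w-1)*(w-1) + (x-1)" by (simp add: algebra_simps)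
  moreover have "(w-1)*(w-1) \<ge> 0" by simp
  ultimately have "w*(w+x-3) - (w*x-w-x) > 0" using xg by linarith
  then have "z*(w*x-w-x) > 1*(w*x-w-x)" using E(1) by simp
  then have "z > 1" using Dp by (simp add: mult_less_cancel_right)
  then show ?thesis using xg by simp
qed

lemma comp_bounds:
  assumes "p \<in> Xcomp"
  shows "1 < fst (snd p) \<and> 1 < snd (snd (snd p))"
proof -
  let ?U = "{p::real\<times>real\<times>real\<times>real. 1 < fst (snd p)} \<inter> {p. 1 < snd (snd (snd p))}"
  let ?T = "{p::real\<times>real\<times>real\<times>real. 1 \<le> fst (snd p)} \<inter> {p. 1 \<le> (fst p - 1) * (fst (snd p) - 1)}"
  have oU: "open ?U"
    by (intro open_Int open_Collect_less continuous_intros)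
  have cT: "closed ?T"
    by (intro closed_Int closed_Collect_le continuous_intros)
  have oV: "open (- ?T)" by (rule open_Compl[OF cT])
  have conn: "connected Xcomp" unfolding Xcomp_def by (rule connected_connected_component)
  have sub: "Xcomp \<subseteq> Xvar" unfolding Xcomp_def by (rule connected_component_subset)
  have c3: "(3,3,3,3) \<in> Xcomp" unfolding Xcomp_def
    by (simp add: Xvar_def)
  have UT: "q \<in> ?T" if "q \<in> Xvar" "q \<in> ?U" for q
  proof -
    obtain w x y z where q: "q = (w,x,y,z)" by (cases q) auto
    have e: "w+x+y+z = 3+w*y" "w*y = z*x" using that(1) q by (auto simp: Xvar_def)
    have "x > 1" "z > 1" using that(2) q by auto
    with X_pos[OF e] have "w*x-w-x > 0" by simp
    then have "(w-1)*(x-1) \<ge> 1" by (simp add: algebra_simps)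
    then show ?thesis using q \<open>x > 1\<close> by simp
  qed
  have TU: "q \<in> ?U" if "q \<in> Xvar" "q \<in> ?T" for q
  proof -
    obtain w x y z where q: "q = (w,x,y,z)" by (cases q) auto
    have e: "w+x+y+z = 3+w*y" "w*y = z*x" using that(1) q by (auto simp: Xvar_def)
    have "x \<ge> 1" "(w-1)*(x-1) \<ge> 1" using that(2) q by auto
    from X_back[OF e this] show ?thesis using q by simp
  qed
  have "?U \<inter> (- ?T) \<inter> Xcomp = {}" using UT sub by blast
  moreover have "Xcomp \<subseteq> ?U \<union> (- ?T)" using TU sub by blast
  ultimately have "?U \<inter> Xcomp = {} \<or> (- ?T) \<inter> Xcomp = {}"
    using connectedD[OF conn oU oV] by blast
  moreover have "(3,3,3,3) \<in> ?U \<inter> Xcomp" using c3 by simp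
  ultimately have "(- ?T) \<inter> Xcomp = {}" by blast
  then have "p \<in> ?T" using assms by blast
  then have "p \<in> ?U" using TU assms sub by blast
  then show ?thesis by simp
qed

lemma tr_s2_gt:
  fixes w x y z :: real
  assumes e1: "w+x+y+z = 3+w*y" and e2: "w*y = z*x" and x1: "x > 1" and z1: "z > 1"
    and nc: "(w,x,y,z) \<noteq> (3,3,3,3)"
  shows "w + z - 2*x - 2*y + x*y > 3" "x + y - 2*w - 2*z + w*z > 3"
proof -
  define D where "D = w*x-w-x"
  have Dp: "D > 0" unfolding D_def by (rule X_pos[OF e1 e2 x1 z1])
  note E = Xeqs[OF e1 e2, folded D_def]
  define Qf where "Qf = (w-3)^2 - (w-3)*(x-3) + (x-3)^2"
  have wx: "w \<noteq> 3 \<or> x \<noteq> 3"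
  proof (rule ccontr)
    assume "\<not> (w \<noteq> 3 \<or> x \<noteq> 3)"
    then have w3: "w = 3" and x3: "x = 3" by auto
    then have "D = 3" unfolding D_def by simp
    then have "y = 3" "z = 3" using E w3 x3 by auto
    then show False using nc w3 x3 by simp
  qed
  have Qp: "Qf > 0"
  proof -
    have "4*Qf = (2*(w-3) - (x-3))^2 + 3*(x-3)^2" unfolding Qf_def by (simp add: power2_eq_square algebra_simps)
    moreover have "(2*(w-3) - (x-3))^2 + 3*(x-3)^2 > 0"
    proof (cases "x = 3")
      case True then show ?thesis using wx by simp
    next
      case False then show ?thesis by (simp add: add_nonneg_pos)
    qed
    ultimately show ?thesis by simp
  qed
  have wp: "w > 1"
  proof -
    have "(w-1)*(x-1) > 1" using Dp unfolding D_def by (simp add: algebra_simps)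
    then show ?thesis using x1 by (smt (verit) mult_nonpos_nonneg)
  qed
  have h1: "D*(w + z - 2*x - 2*y + x*y - 3) = x*Qf"
  proof -
    have "D*(w + z - 2*x - 2*y + x*y - 3) = D*(w-2*x-3) + z*D + (x-2)*(y*D)" by (simp add: algebra_simps)
    also have "\<dots> = D*(w-2*x-3) + w*(w+x-3) + (x-2)*(x*(w+x-3))" by (simp only: E)
    also have "\<dots> = x*Qf" unfolding Qf_def D_def by algebra
    finally show ?thesis .
  qed
  have h2: "D*(x + y - 2*w - 2*z + w*z - 3) = w*Qf"
  proof -
    have "D*(x + y - 2*w - 2*z + w*z - 3) = D*(x-2*w-3) + y*D + (w-2)*(z*D)" by (simp add: algebra_simps)
    also have "\<dots> = D*(x-2*w-3) + x*(w+x-3) + (w-2)*(w*(w+x-3))" by (simp only: E)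
    also have "\<dots> = w*Qf" unfolding Qf_def D_def by algebra
    finally show ?thesis .
  qed
  have "x*Qf > 0" "w*Qf > 0" using x1 wp Qp by simp_all
  then show "w + z - 2*x - 2*y + x*y > 3" "x + y - 2*w - 2*z + w*z > 3"
    using h1 h2 Dp by (smt (verit) mult_pos_pos zero_less_mult_iff)+
qed



definition cols4 :: "real^4 \<Rightarrow> real^4 \<Rightarrow> real^4 \<Rightarrow> real^4 \<Rightarrow> real^4^4" where
  "cols4 v1 v2 v3 v4 = (\<chi> i j. if j = 1 then v1$i else if j = 2 then v2$i else if j = 3 then v3$i else v4$i)"

definition e1v :: "real^4" where "e1v = vector [1,0,0,0]"

lemma mult_cols4: "M ** cols4 v1 v2 v3 v4 = cols4 (M *v v1) (M *v v2) (M *v v3) (M *v v4)"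
  by (simp add: mat4_eq cols4_def matrix_matrix_mult_def matrix_vector_mult_def sum_4)

lemma cols4_perm: "cols4 v1 v2 v3 v4 ** permA = cols4 v2 v3 v1 v4"
  by (simp add: mat4_eq cols4_def matrix_matrix_mult_def permA_def sum_4)

lemma cols4_diag: "cols4 v1 v2 v3 v4 ** diag4 l1 l2 l3 = cols4 (l1 *s v1) (l2 *s v2) (l3 *s v3) v4"
  by (simp add: mat4_eq cols4_def matrix_matrix_mult_def diag4_def sum_4)

lemma vec4_eq: "(v::'a^4) = w \<longleftrightarrow> (v$1) = w$1 \<and> (v$2) = w$2 \<and> (v$3) = w$3 \<and> (v$4) = w$4"
  by (auto simp: vec_eq_iff forall_4 simp del: One_nat_def)

lemma A3v: "matA a b *v (matA a b *v (matA a b *v v)) = v"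
  by (simp add: vec4_eq matA_def matrix_vector_mult_def sum_4 algebra_simps)

lemma A_e1: "matA a b *v e1v = e1v"
  by (simp add: vec4_eq matA_def e1v_def matrix_vector_mult_def sum_4)

lemma T_e1: "Tm a b c d *v e1v = e1v"
  by (simp add: vec4_eq Tm_def e1v_def matrix_vector_mult_def sum_4)

lemma ell_A: "ellv b (matA a b *v v) = ellv b v"
  by (simp add: ellv_def matA_def matrix_vector_mult_def sum_4 algebra_simps)

lemma cramer3:
  fixes n11 n12 n13 n21 n22 n23 n31 n32 n33 x1 x2 x3 :: real
  assumes E1: "n11*x1 + n12*x2 + n13*x3 = 0"
      and E2: "n21*x1 + n22*x2 + n23*x3 = 0"
      and E3: "n31*x1 + n32*x2 + n33*x3 = 0"
  defines "dt \<equiv> n11*(n22*n33 - n23*n32) - n12*(n21*n33 - n23*n31) + n13*(n21*n32 - n22*n31)"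
  shows "dt*x1 = 0" "dt*x2 = 0" "dt*x3 = 0"
proof -
  have "dt*x1 = (n22*n33 - n23*n32)*(n11*x1 + n12*x2 + n13*x3) - (n12*n33 - n13*n32)*(n21*x1 + n22*x2 + n23*x3) + (n12*n23 - n13*n22)*(n31*x1 + n32*x2 + n33*x3)"
    unfolding dt_def by (simp add: algebra_simps)
  then show "dt*x1 = 0" using E1 E2 E3 by simp
  have "dt*x2 = -(n21*n33 - n23*n31)*(n11*x1 + n12*x2 + n13*x3) + (n11*n33 - n13*n31)*(n21*x1 + n22*x2 + n23*x3) - (n11*n23 - n13*n21)*(n31*x1 + n32*x2 + n33*x3)"
    unfolding dt_def by (simp add: algebra_simps)
  then show "dt*x2 = 0" using E1 E2 E3 by simp
  have "dt*x3 = (n21*n32 - n22*n31)*(n11*x1 + n12*x2 + n13*x3) - (n11*n32 - n12*n31)*(n21*x1 + n22*x2 + n23*x3) + (n11*n22 - n12*n21)*(n31*x1 + n32*x2 + n33*x3)"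
    unfolding dt_def by (simp add: algebra_simps)
  then show "dt*x3 = 0" using E1 E2 E3 by simp
qed

lemma cols4_invertible:
  assumes L: "ellv b v \<noteq> 0" and v34: "(v$3) \<noteq> 0 \<or> (v$4) \<noteq> 0"
  shows "invertible (cols4 v (matA a b *v v) (matA a b *v (matA a b *v v)) e1v)"
proof -
  let ?Q = "cols4 v (matA a b *v v) (matA a b *v (matA a b *v v)) e1v"
  have Qf: "0 < (v$3)^2 - (v$3)*(v$4) + (v$4)^2"
  proof -
    have "4*((v$3)^2 - (v$3)*(v$4) + (v$4)^2) = (2*(v$3) - (v$4))^2 + 3*(v$4)^2" by (simp add: power2_eq_square algebra_simps)
    moreover have "(2*(v$3) - (v$4))^2 + 3*(v$4)^2 > 0"
    proof (cases "(v$4) = 0")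
      case True then show ?thesis using v34 by simp
    next
      case False then show ?thesis by (simp add: add_nonneg_pos)
    qed
    ultimately show ?thesis by simp
  qed
  have ker: "x = 0" if hx: "?Q *v x = 0" for x
  proof -
    have c: "(?Q *v x)$i = 0" for i using hx by simp
    note c2 = c[of 2] and c3 = c[of 3] and c4 = c[of 4] and c1 = c[of 1]
    define n1 where "n1 = (v$2)"
    define n2 where "n2 = (v$3)"
    define n3 where "n3 = (v$4)"
    have E2: "n1*x$1 + (n1 + b*n3)*x$2 + (n1 + b*n2)*x$3 = 0"
      using c2 by (simp add: n1_def n2_def n3_def cols4_def matA_def e1v_def matrix_vector_mult_def sum_4 algebra_simps)
    have E3: "n2*x$1 + (-n3)*x$2 + (n3 - n2)*x$3 = 0"
      using c3 by (simp add: n1_def n2_def n3_def cols4_def matA_def e1v_def matrix_vector_mult_def sum_4 algebra_simps)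
    have E4: "n3*x$1 + (n2 - n3)*x$2 + (-n2)*x$3 = 0"
      using c4 by (simp add: n1_def n2_def n3_def cols4_def matA_def e1v_def matrix_vector_mult_def sum_4 algebra_simps)
    note cr = cramer3[OF E2 E3 E4]
    have dt: "n1*((-n3)*(-n2) - (n3 - n2)*(n2 - n3)) - (n1 + b*n3)*(n2*(-n2) - (n3 - n2)*n3) + (n1 + b*n2)*(n2*(n2 - n3) - (-n3)*n3)
       = ellv b v * ((v$3)^2 - (v$3)*(v$4) + (v$4)^2)"
      by (simp add: n1_def n2_def n3_def ellv_def power2_eq_square algebra_simps)
    have dnz: "ellv b v * ((v$3)^2 - (v$3)*(v$4) + (v$4)^2) \<noteq> 0" using L Qf by simp
    have x1: "x$1 = 0" "x$2 = 0" "x$3 = 0" using cr dt dnz by simp_all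
    have "x$4 = 0" using c1 x1 by (simp add: cols4_def e1v_def matrix_vector_mult_def sum_4)
    then show "x = 0" using x1 by (simp add: vec4_eq)
  qed
  then have "\<exists>B. B ** ?Q = mat 1" using matrix_left_invertible_ker by blast
  then show ?thesis using invertible_left_inverse by blast
qed

lemma idT_1: "(Tm a b c d *v q1v a b c d l)$1 - l * (q1v a b c d l)$1 = (-(a^2*c^2) - b*c - a*d + 3*a*c) * fpol a b c d l"
  by (simp add: q1v_def Tm_def matrix_vector_mult_def sum_4 fpol_def trp_def s2p_def) algebra

lemma idT_2: "(Tm a b c d *v q1v a b c d l)$2 - l * (q1v a b c d l)$2 = (-(a*b*c^2) - b*d + 2*b*c + a*c) * fpol a b c d l"
  by (simp add: q1v_def Tm_def matrix_vector_mult_def sum_4 fpol_def trp_def s2p_def) algebra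

lemma idT_3: "(Tm a b c d *v q1v a b c d l)$3 - l * (q1v a b c d l)$3 = (-(a*c*d) + a*c^2 + 2*d - c) * fpol a b c d l"
  by (simp add: q1v_def Tm_def matrix_vector_mult_def sum_4 fpol_def trp_def s2p_def) algebra

lemma idT_4: "(Tm a b c d *v q1v a b c d l)$4 - l * (q1v a b c d l)$4 = (a*c^2 + d - 2*c) * fpol a b c d l"
  by (simp add: q1v_def Tm_def matrix_vector_mult_def sum_4 fpol_def trp_def s2p_def) algebra

lemma id_ell: "ellv b (q1v a b c d l) - (l-1)*(3*l^2 - 2*trp a b c d*l + s2p a b c d) = -3*fpol a b c d l + (1-l^2)*relp a b c d"
  by (simp add: ellv_def q1v_def fpol_def trp_def s2p_def relp_def) algebra

lemma id_q2_1:
  "ellv b (q1v a b c d l) * (Tm a b c d *v (matA a b *v q1v a b c d l))$1 - ellv b (Tm a b c d *v (matA a b *v q1v a b c d l)) * (matA a b *v q1v a b c d l)$1 =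
   (-(a^4*b^2*c^5*d*l^2) - a^4*b^2*c^6*l^2 + a^4*b^2*c^3*d^3*l + a^4*b^2*c^4*d^2*l - 2*a^3*b^2*c^3*d^2*l^2 + 2*a^3*b^2*c^4*d*l^2 + 7*a^3*b^2*c^5*l^2 - a^4*b*c^3*d^2*l^2 + a^4*b*c^4*d*l^2 + 5*a^4*b*c^5*l^2 + a^3*b^2*c*d^4*l - a^3*b^2*c^2*d^3*l - 7*a^3*b^2*c^3*d^2*l - a^3*b^2*c^4*d*l + a^3*b^2*c^5*l - 5*a^4*b*c^3*d^2*l - a^4*b*c^4*d*l + a^4*b*c^5*l - a^2*b^2*c*d^3*l^2 + 3*a^2*b^2*c^2*d^2*l^2 + 6*a^2*b^2*c^3*d*l^2 - 16*a^2*b^2*c^4*l^2 + 5*a^3*b*c^2*d^2*l^2 + 10*a^3*b*c^3*d*l^2 - 22*a^3*b*c^4*l^2 + 3*a^4*c^3*d*l^2 - 6*a^4*c^4*l^2 - 5*a^2*b^2*c*d^3*l + 9*a^2*b^2*c^2*d^2*l + 9*a^2*b^2*c^3*d*l - 5*a^2*b^2*c^4*l - a^3*b*d^4*l - 6*a^3*b*c*d^3*l + 8*a^3*b*c^2*d^2*l + 15*a^3*b*c^3*d*l - 7*a^3*b*c^4*l + 6*a^4*c^3*d*l - 3*a^4*c^4*l + 3*a*b^2*c*d^2*l^2 - 12*a*b^2*c^2*d*l^2 + 12*a*b^2*c^3*l^2 + a^2*b*d^3*l^2 - 30*a^2*b*c^2*d*l^2 + 25*a^2*b*c^3*l^2 -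 15*a^3*c^2*d*l^2 + 12*a^3*c^3*l^2 + a^3*b*d^4 - a^3*b*c^2*d^2 - a^3*b*c^3*d - a^3*b*c^4 + 6*a*b^2*c*d^2*l - 15*a*b^2*c^2*d*l + 6*a*b^2*c^3*l + 4*a^2*b*d^3*l + 15*a^2*b*c*d^2*l - 27*a^2*b*c^2*d*l + 7*a^2*b*c^3*l + 3*a^3*d^3*l + 6*a^3*c*d^2*l - 12*a^3*c^2*d*l + 3*a^3*c^3*l - 3*a*b*d^2*l^2 + 12*a*b*c*d*l^2 - 3*a*b*c^2*l^2 - 3*a^2*d^2*l^2 + 12*a^2*c*d*l^2 - 3*a^2*c^2*l^2 - 5*a^2*b*d^3 + 3*a^2*b*c*d^2 + 3*a^2*b*c^2*d + 4*a^2*b*c^3 - 3*a^3*d^3 + 3*a^3*c*d^2 + 3*a^3*c^3 - 3*a*b*d^2*l - 6*a*b*c*d*l + 6*a*b*c^2*l - 3*a^2*d^2*l - 6*a^2*c*d*l + 6*a^2*c^2*l + 6*a*b*d^2 - 6*a*b*c*d - 3*a*b*c^2 + 6*a^2*d^2 - 6*a^2*c*d - 3*a^2*c^2) * relp a b c d + (a^4*b^2*c^4*d^2 + a^4*b^2*c^5*d + a^3*b^2*c^2*d^3 - 2*a^3*b^2*c^3*d^2 - 7*a^3*b^2*c^4*d - a^3*b^2*c^5 - a^4*b*c^3*d^2 - 5*a^4*b*c^4*d - a^4*b*c^5 + a^3*b*c^2*d^2*l - a^3*b*c^4*l - a^2*b^2*c*d^3 - 3*a^2*b^2*c^2*d^2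 + 12*a^2*b^2*c^3*d + 5*a^2*b^2*c^4 - 2*a^3*b*c*d^3 - 2*a^3*b*c^2*d^2 + 19*a^3*b*c^3*d + 10*a^3*b*c^4 + 3*a^4*c^3*d + 3*a^4*c^4 - 2*a^2*b*c*d^2*l - 4*a^2*b*c^2*d*l + 4*a^2*b*c^3*l - 3*a^3*c^2*d*l + 3*a^3*c^3*l + 3*a*b^2*c*d^2 - 3*a*b^2*c^2*d - 6*a*b^2*c^3 + 3*a^2*b*d^3 + 11*a^2*b*c*d^2 - 17*a^2*b*c^2*d - 22*a^2*b*c^3 + 6*a^3*c*d^2 - 9*a^3*c^2*d - 12*a^3*c^3 + 6*a*b*c*d*l - 3*a*b*c^2*l + 6*a^2*c*d*l - 3*a^2*c^2*l - 9*a*b*d^2 + 3*a*b*c*d + 12*a*b*c^2 - 9*a^2*d^2 + 3*a^2*c*d + 12*a^2*c^2) * fpol a b c d l"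
  by (simp add: ellv_def q1v_def Tm_def matA_def matrix_vector_mult_def sum_4 relp_def fpol_def trp_def s2p_def) algebra

lemma id_q2_2:
  "ellv b (q1v a b c d l) * (Tm a b c d *v (matA a b *v q1v a b c d l))$2 - ellv b (Tm a b c d *v (matA a b *v q1v a b c d l)) * (matA a b *v q1v a b c d l)$2 =
   (-(a^3*b^3*c^5*d*l^2) - a^3*b^3*c^6*l^2 + a^3*b^3*c^3*d^3*l + a^3*b^3*c^4*d^2*l - 2*a^2*b^3*c^3*d^2*l^2 + 2*a^2*b^3*c^4*d*l^2 + 7*a^2*b^3*c^5*l^2 - a^3*b^2*c^3*d^2*l^2 + a^3*b^2*c^4*d*l^2 + 5*a^3*b^2*c^5*l^2 + a^2*b^3*c*d^4*l - a^2*b^3*c^2*d^3*l - 7*a^2*b^3*c^3*d^2*l - a^2*b^3*c^4*d*l + a^2*b^3*c^5*l - 5*a^3*b^2*c^3*d^2*l - a^3*b^2*c^4*d*l + a^3*b^2*c^5*l - a*b^3*c*d^3*l^2 + 3*a*b^3*c^2*d^2*l^2 + 6*a*b^3*c^3*d*l^2 - 16*a*b^3*c^4*l^2 + 5*a^2*b^2*c^2*d^2*l^2 + 10*a^2*b^2*c^3*d*l^2 - 22*a^2*b^2*c^4*l^2 + 3*a^3*b*c^3*d*l^2 - 6*a^3*b*c^4*l^2 - 5*a*b^3*c*d^3*l + 9*a*b^3*c^2*d^2*l + 9*a*b^3*c^3*d*l - 5*a*b^3*c^4*l - a^2*b^2*d^4*l - 6*a^2*b^2*c*d^3*l + 8*a^2*b^2*c^2*d^2*l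 + 15*a^2*b^2*c^3*d*l - 7*a^2*b^2*c^4*l + 6*a^3*b*c^3*d*l - 3*a^3*b*c^4*l + 3*b^3*c*d^2*l^2 - 12*b^3*c^2*d*l^2 + 12*b^3*c^3*l^2 + a*b^2*d^3*l^2 - 30*a*b^2*c^2*d*l^2 + 25*a*b^2*c^3*l^2 - 15*a^2*b*c^2*d*l^2 + 12*a^2*b*c^3*l^2 + a^2*b^2*d^4 - a^2*b^2*c^2*d^2 - a^2*b^2*c^3*d - a^2*b^2*c^4 + 6*b^3*c*d^2*l - 15*b^3*c^2*d*l + 6*b^3*c^3*l + 4*a*b^2*d^3*l + 15*a*b^2*c*d^2*l - 27*a*b^2*c^2*d*l + 7*a*b^2*c^3*l + 3*a^2*b*d^3*l + 6*a^2*b*c*d^2*l - 12*a^2*b*c^2*d*l + 3*a^2*b*c^3*l - 3*b^2*d^2*l^2 + 12*b^2*c*d*l^2 - 3*b^2*c^2*l^2 - 3*a*b*d^2*l^2 + 12*a*b*c*d*l^2 - 3*a*b*c^2*l^2 - 5*a*b^2*d^3 + 3*a*b^2*c*d^2 + 3*a*b^2*c^2*d + 4*a*b^2*c^3 - 3*a^2*b*d^3 + 3*a^2*b*c*d^2 + 3*a^2*b*c^3 - 3*b^2*d^2*l - 6*b^2*c*d*l + 6*b^2*c^2*l - 3*a*b*d^2*l - 6*a*b*c*d*l + 6*a*b*c^2*l + 6*b^2*d^2 - 6*b^2*c*d - 3*b^2*c^2 + 6*a*b*d^2 - 6*a*b*c*d - 3*a*b*c^2) * relp a b c d + (a^3*b^3*c^4*d^2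 + a^3*b^3*c^5*d + a^2*b^3*c^2*d^3 - 2*a^2*b^3*c^3*d^2 - 7*a^2*b^3*c^4*d - a^2*b^3*c^5 - a^3*b^2*c^3*d^2 - 5*a^3*b^2*c^4*d - a^3*b^2*c^5 + a^2*b^2*c^2*d^2*l - a^2*b^2*c^4*l - a*b^3*c*d^3 - 3*a*b^3*c^2*d^2 + 12*a*b^3*c^3*d + 5*a*b^3*c^4 - 2*a^2*b^2*c*d^3 - 2*a^2*b^2*c^2*d^2 + 19*a^2*b^2*c^3*d + 10*a^2*b^2*c^4 + 3*a^3*b*c^3*d + 3*a^3*b*c^4 - 2*a*b^2*c*d^2*l - 4*a*b^2*c^2*d*l + 4*a*b^2*c^3*l - 3*a^2*b*c^2*d*l + 3*a^2*b*c^3*l + 3*b^3*c*d^2 - 3*b^3*c^2*d - 6*b^3*c^3 + 3*a*b^2*d^3 + 11*a*b^2*c*d^2 - 17*a*b^2*c^2*d - 22*a*b^2*c^3 + 6*a^2*b*c*d^2 - 9*a^2*b*c^2*d - 12*a^2*b*c^3 + 6*b^2*c*d*l - 3*b^2*c^2*l + 6*a*b*c*d*l - 3*a*b*c^2*l - 9*b^2*d^2 + 3*b^2*c*d + 12*b^2*c^2 - 9*a*b*d^2 + 3*a*b*c*d + 12*a*b*c^2) * fpol a b c d l"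
  by (simp add: ellv_def q1v_def Tm_def matA_def matrix_vector_mult_def sum_4 relp_def fpol_def trp_def s2p_def) algebra

lemma id_q2_3:
  "ellv b (q1v a b c d l) * (Tm a b c d *v (matA a b *v q1v a b c d l))$3 - ellv b (Tm a b c d *v (matA a b *v q1v a b c d l)) * (matA a b *v q1v a b c d l)$3 =
   (-(a^3*b^2*c^4*d^2*l^2) + a^3*b^2*c^5*d*l^2 + 2*a^3*b^2*c^6*l^2 + a^3*b^2*c^2*d^4*l - a^3*b^2*c^3*d^3*l - 2*a^3*b^2*c^4*d^2*l - 2*a^2*b^2*c^2*d^3*l^2 + 6*a^2*b^2*c^3*d^2*l^2 + 3*a^2*b^2*c^4*d*l^2 - 14*a^2*b^2*c^5*l^2 - a^3*b*c^2*d^3*l^2 + 3*a^3*b*c^3*d^2*l^2 + 3*a^3*b*c^4*d*l^2 - 10*a^3*b*c^5*l^2 + a^2*b^2*d^5*l - 3*a^2*b^2*c*d^4*l - 5*a^2*b^2*c^2*d^3*l + 13*a^2*b^2*c^3*d^2*l + 3*a^2*b^2*c^4*d*l - 2*a^2*b^2*c^5*l - 5*a^3*b*c^2*d^3*l + 9*a^3*b*c^3*d^2*l + 3*a^3*b*c^4*d*l - 2*a^3*b*c^5*l - a*b^2*d^4*l^2 + 5*a*b^2*c*d^3*l^2 - 28*a*b^2*c^3*d*l^2 + 32*a*b^2*c^4*l^2 + 4*a^2*b*c*d^3*l^2 - 42*a^2*b*c^3*d*l^2 + 43*a^2*b*c^4*l^2 + 3*a^3*c^2*d^2*l^2 - 12*a^3*c^3*d*l^2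 + 12*a^3*c^4*l^2 - 5*a*b^2*d^4*l + 19*a*b^2*c*d^3*l - 9*a*b^2*c^2*d^2*l - 23*a*b^2*c^3*d*l + 10*a*b^2*c^4*l - 4*a^2*b*d^4*l + 21*a^2*b*c*d^3*l - 37*a^2*b*c^3*d*l + 15*a^2*b*c^4*l + 6*a^3*c^2*d^2*l - 15*a^3*c^3*d*l + 6*a^3*c^4*l + 3*b^2*d^3*l^2 - 18*b^2*c*d^2*l^2 + 36*b^2*c^2*d*l^2 - 24*b^2*c^3*l^2 - 27*a*b*c*d^2*l^2 + 81*a*b*c^2*d*l^2 - 45*a*b*c^3*l^2 - 12*a^2*c*d^2*l^2 + 39*a^2*c^2*d*l^2 - 21*a^2*c^3*l^2 - 2*a^2*b*d^4 - a^2*b*c*d^3 + a^2*b*c^3*d + 2*a^2*b*c^4 + 6*b^2*d^3*l - 27*b^2*c*d^2*l + 36*b^2*c^2*d*l - 12*b^2*c^3*l + 9*a*b*d^3*l - 63*a*b*c*d^2*l + 63*a*b*c^2*d*l - 18*a*b*c^3*l + 3*a^2*d^3*l - 30*a^2*c*d^2*l + 30*a^2*c^2*d*l - 9*a^2*c^3*l + 9*b*d^2*l^2 - 18*b*c*d*l^2 + 9*a*d^2*l^2 - 18*a*c*d*l^2 + 9*a*b*d^3 - 9*a*b*c^3 + 6*a^2*d^3 - 3*a^2*c*d^2 + 3*a^2*c^2*d - 6*a^2*c^3 + 18*b*c*d*l - 9*b*c^2*l + 18*a*c*d*l - 9*a*c^2*l - 9*b*d^2 + 9*b*c^2 - 9*a*d^2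 + 9*a*c^2) * relp a b c d + (a^3*b^2*c^3*d^3 - a^3*b^2*c^4*d^2 - 2*a^3*b^2*c^5*d + a^2*b^2*c*d^4 - 4*a^2*b^2*c^2*d^3 - 3*a^2*b^2*c^3*d^2 + 13*a^2*b^2*c^4*d + 2*a^2*b^2*c^5 - a^3*b*c^2*d^3 - 3*a^3*b*c^3*d^2 + 9*a^3*b*c^4*d + 2*a^3*b*c^5 + a^2*b*c*d^3*l - 2*a^2*b*c^2*d^2*l - a^2*b*c^3*d*l + 2*a^2*b*c^4*l - a*b^2*d^4 - a*b^2*c*d^3 + 18*a*b^2*c^2*d^2 - 19*a*b^2*c^3*d - 10*a*b^2*c^4 - a^2*b*d^4 + a^2*b*c*d^3 + 23*a^2*b*c^2*d^2 - 27*a^2*b*c^3*d - 21*a^2*b*c^4 + 3*a^3*c^2*d^2 - 3*a^3*c^3*d - 6*a^3*c^4 - a*b*d^3*l + 12*a*b*c^2*d*l - 7*a*b*c^3*l - 3*a^2*c*d^2*l + 9*a^2*c^2*d*l - 6*a^2*c^3*l + 3*b^2*d^3 - 9*b^2*c*d^2 + 12*b^2*c^3 + 4*a*b*d^3 - 33*a*b*c*d^2 + 3*a*b*c^2*d + 49*a*b*c^3 + 3*a^2*d^3 - 15*a^2*c*d^2 + 27*a^2*c^3 + 3*b*d^2*l - 12*b*c*d*l + 3*b*c^2*l + 3*a*d^2*l - 12*a*c*d*l + 3*a*c^2*l + 6*b*d^2 + 21*b*c*d - 30*b*c^2 + 6*a*d^2 + 21*a*c*d - 30*a*c^2) * fpol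 a b c d l"
  by (simp add: ellv_def q1v_def Tm_def matA_def matrix_vector_mult_def sum_4 relp_def fpol_def trp_def s2p_def) algebra

lemma id_q2_4:
  "ellv b (q1v a b c d l) * (Tm a b c d *v (matA a b *v q1v a b c d l))$4 - ellv b (Tm a b c d *v (matA a b *v q1v a b c d l)) * (matA a b *v q1v a b c d l)$4 =
   (a^3*b^2*c^4*d^2*l^2 + 2*a^3*b^2*c^5*d*l^2 + a^3*b^2*c^6*l^2 - a^3*b^2*c^2*d^4*l - 2*a^3*b^2*c^3*d^3*l - a^3*b^2*c^4*d^2*l + 2*a^2*b^2*c^2*d^3*l^2 - 9*a^2*b^2*c^4*d*l^2 - 7*a^2*b^2*c^5*l^2 + a^3*b*c^2*d^3*l^2 - 6*a^3*b*c^4*d*l^2 - 5*a^3*b*c^5*l^2 - a^2*b^2*d^5*l + 8*a^2*b^2*c^2*d^3*l + 8*a^2*b^2*c^3*d^2*l - a^2*b^2*c^5*l + 5*a^3*b*c^2*d^3*l + 6*a^3*b*c^3*d^2*l - a^3*b*c^5*l + a*b^2*d^4*l^2 - 2*a*b^2*c*d^3*l^2 - 9*a*b^2*c^2*d^2*l^2 + 10*a*b^2*c^3*d*l^2 + 16*a*b^2*c^4*l^2 - 4*a^2*b*c*d^3*l^2 - 15*a^2*b*c^2*d^2*l^2 + 12*a^2*b*c^3*d*l^2 + 23*a^2*b*c^4*l^2 - 3*a^3*c^2*d^2*l^2 + 3*a^3*c^3*d*l^2 + 6*a^3*c^4*l^2 + 5*a*b^2*d^4*l - 4*a*b^2*c*d^3*l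 - 18*a*b^2*c^2*d^2*l - 4*a*b^2*c^3*d*l + 5*a*b^2*c^4*l + 7*a^2*b*d^4*l - 3*a^2*b*c*d^3*l - 24*a^2*b*c^2*d^2*l - 8*a^2*b*c^3*d*l + 6*a^2*b*c^4*l - 6*a^3*c^2*d^2*l - 3*a^3*c^3*d*l + 3*a^3*c^4*l - 3*b^2*d^3*l^2 + 9*b^2*c*d^2*l^2 - 12*b^2*c^3*l^2 - 3*a*b*d^3*l^2 + 27*a*b*c*d^2*l^2 + 9*a*b*c^2*d*l^2 - 30*a*b*c^3*l^2 + 12*a^2*c*d^2*l^2 + 6*a^2*c^2*d*l^2 - 15*a^2*c^3*l^2 - a^2*b*d^4 + a^2*b*c*d^3 + 3*a^2*b*c^2*d^2 + 2*a^2*b*c^3*d + a^2*b*c^4 - 6*b^2*d^3*l + 9*b^2*c*d^2*l + 9*b^2*c^2*d*l - 6*b^2*c^3*l - 21*a*b*d^3*l + 18*a*b*c*d^2*l + 18*a*b*c^2*d*l - 3*a*b*c^3*l - 12*a^2*d^3*l + 12*a^2*c*d^2*l + 6*a^2*c^2*d*l - 18*b*c*d*l^2 + 9*b*c^2*l^2 - 18*a*c*d*l^2 + 9*a*c^2*l^2 + 6*a*b*d^3 - 9*a*b*c*d^2 - 9*a*b*c^2*d - 3*a*b*c^3 + 3*a^2*d^3 - 6*a^2*c*d^2 - 3*a^2*c^2*d - 3*a^2*c^3 + 9*b*d^2*l - 9*b*c^2*l + 9*a*d^2*l - 9*a*c^2*l - 9*b*d^2 + 18*b*c*d - 9*a*d^2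 + 18*a*c*d) * relp a b c d + (-(a^3*b^2*c^3*d^3) - 2*a^3*b^2*c^4*d^2 - a^3*b^2*c^5*d - a^2*b^2*c*d^4 + a^2*b^2*c^2*d^3 + 9*a^2*b^2*c^3*d^2 + 8*a^2*b^2*c^4*d + a^2*b^2*c^5 + a^3*b*c^2*d^3 + 6*a^3*b*c^3*d^2 + 6*a^3*b*c^4*d + a^3*b*c^5 - a^2*b*c*d^3*l - a^2*b*c^2*d^2*l + a^2*b*c^3*d*l + a^2*b*c^4*l + a*b^2*d^4 + 4*a*b^2*c*d^3 - 9*a*b^2*c^2*d^2 - 17*a*b^2*c^3*d - 5*a*b^2*c^4 + a^2*b*d^4 + 5*a^2*b*c*d^3 - 17*a^2*b*c^2*d^2 - 30*a^2*b*c^3*d - 9*a^2*b*c^4 - 3*a^3*c^2*d^2 - 6*a^3*c^3*d - 3*a^3*c^4 + a*b*d^3*l + 6*a*b*c*d^2*l - 5*a*b*c^3*l + 3*a^2*c*d^2*l - 3*a^2*c^3*l - 3*b^2*d^3 + 9*b^2*c^2*d + 6*b^2*c^3 - 13*a*b*d^3 + 48*a*b*c^2*d + 17*a*b*c^3 - 3*a^2*d^3 - 3*a^2*c*d^2 + 27*a^2*c^2*d + 9*a^2*c^3 - 3*b*d^2*l - 6*b*c*d*l + 6*b*c^2*l - 3*a*d^2*l - 6*a*c*d*l + 6*a*c^2*l + 21*b*d^2 - 30*b*c*d - 6*b*c^2 + 21*a*d^2 - 30*a*c*d - 6*a*c^2) * fpol a b c d l"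
  by (simp add: ellv_def q1v_def Tm_def matA_def matrix_vector_mult_def sum_4 relp_def fpol_def trp_def s2p_def) algebra

lemma id_q3_1:
  "ellv b (q1v a b c d l) * (Tm a b c d *v (matA a b *v (matA a b *v q1v a b c d l)))$1 - ellv b (Tm a b c d *v (matA a b *v (matA a b *v q1v a b c d l))) * (matA a b *v (matA a b *v q1v a b c d l))$1 =
   (a^5*b^3*c^6*d^2*l^2 - a^5*b^3*c^8*l^2 - a^5*b^3*c^4*d^4*l + a^5*b^3*c^6*d^2*l + 2*a^4*b^3*c^4*d^3*l^2 - 6*a^4*b^3*c^5*d^2*l^2 - 6*a^4*b^3*c^6*d*l^2 + 8*a^4*b^3*c^7*l^2 + 2*a^5*b^2*c^4*d^3*l^2 - 4*a^5*b^2*c^5*d^2*l^2 - 5*a^5*b^2*c^6*d*l^2 + 7*a^5*b^2*c^7*l^2 - a^4*b^3*c^2*d^5*l + 4*a^4*b^3*c^3*d^4*l + 7*a^4*b^3*c^4*d^3*l - 7*a^4*b^3*c^5*d^2*l - 2*a^4*b^3*c^6*d*l + a^4*b^3*c^7*l - a^5*b^2*c^2*d^5*l + 2*a^5*b^2*c^3*d^4*l + 6*a^5*b^2*c^4*d^3*l - 6*a^5*b^2*c^5*d^2*l - 2*a^5*b^2*c^6*d*l + a^5*b^2*c^7*l + a^3*b^3*c^2*d^4*l^2 - 8*a^3*b^3*c^3*d^3*l^2 + 3*a^3*b^3*c^4*d^2*l^2 + 34*a^3*b^3*c^5*d*l^2 - 23*a^3*b^3*c^6*l^2 + a^4*b^2*c^2*d^4*l^2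 - 14*a^4*b^2*c^3*d^3*l^2 + 2*a^4*b^2*c^4*d^2*l^2 + 58*a^4*b^2*c^5*d*l^2 - 40*a^4*b^2*c^6*l^2 + a^5*b*c^2*d^4*l^2 - 4*a^5*b*c^3*d^3*l^2 - 3*a^5*b*c^4*d^2*l^2 + 22*a^5*b*c^5*d*l^2 - 16*a^5*b*c^6*l^2 + 2*a^3*b^3*c*d^5*l + 2*a^3*b^3*c^2*d^4*l - 27*a^3*b^3*c^3*d^3*l + 5*a^3*b^3*c^4*d^2*l + 17*a^3*b^3*c^5*d*l - 6*a^3*b^3*c^6*l + 4*a^4*b^2*c*d^5*l + 6*a^4*b^2*c^2*d^4*l - 43*a^4*b^2*c^3*d^3*l + 6*a^4*b^2*c^4*d^2*l + 31*a^4*b^2*c^5*d*l - 11*a^4*b^2*c^6*l + 5*a^5*b*c^2*d^4*l - 14*a^5*b*c^3*d^3*l + 14*a^5*b*c^5*d*l - 5*a^5*b*c^6*l - 2*a^2*b^3*c*d^4*l^2 + 4*a^2*b^3*c^2*d^3*l^2 + 24*a^2*b^3*c^3*d^2*l^2 - 62*a^2*b^3*c^4*d*l^2 + 28*a^2*b^3*c^5*l^2 - 4*a^3*b^2*c*d^4*l^2 + 19*a^3*b^2*c^2*d^3*l^2 + 64*a^3*b^2*c^3*d^2*l^2 - 167*a^3*b^2*c^4*d*l^2 + 74*a^3*b^2*c^5*l^2 - 4*a^4*b*c*d^4*l^2 + 8*a^4*b*c^2*d^3*l^2 + 56*a^4*b*c^3*d^2*l^2 - 126*a^4*b*c^4*d*l^2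 + 58*a^4*b*c^5*l^2 + a^4*b^2*c^4*d^2 - a^4*b^2*c^6 - 3*a^5*c^2*d^3*l^2 + 15*a^5*c^3*d^2*l^2 - 24*a^5*c^4*d*l^2 + 12*a^5*c^5*l^2 - 10*a^2*b^3*c*d^4*l + 17*a^2*b^3*c^2*d^3*l + 30*a^2*b^3*c^3*d^2*l - 40*a^2*b^3*c^4*d*l + 11*a^2*b^3*c^5*l - 3*a^3*b^2*d^5*l - 30*a^3*b^2*c*d^4*l + 44*a^3*b^2*c^2*d^3*l + 81*a^3*b^2*c^3*d^2*l - 105*a^3*b^2*c^4*d*l + 29*a^3*b^2*c^5*l - 20*a^4*b*c*d^4*l + 18*a^4*b*c^2*d^3*l + 72*a^4*b*c^3*d^2*l - 86*a^4*b*c^4*d*l + 24*a^4*b*c^5*l - 6*a^5*c^2*d^3*l + 21*a^5*c^3*d^2*l - 21*a^5*c^4*d*l + 6*a^5*c^5*l + 6*a*b^3*c*d^3*l^2 - 27*a*b^3*c^2*d^2*l^2 + 36*a*b^3*c^3*d*l^2 - 12*a*b^3*c^4*l^2 + 3*a^2*b^2*d^4*l^2 + 8*a^2*b^2*c*d^3*l^2 - 117*a^2*b^2*c^2*d^2*l^2 + 156*a^2*b^2*c^3*d*l^2 - 46*a^2*b^2*c^4*l^2 + 4*a^3*b*d^4*l^2 + 14*a^3*b*c*d^3*l^2 - 146*a^3*b*c^2*d^2*l^2 + 186*a^3*b*c^3*d*l^2 - 54*a^3*b*c^4*l^2 + a^3*b^2*c^2*d^3 - 4*a^3*b^2*c^3*d^2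 - 5*a^3*b^2*c^4*d + 6*a^3*b^2*c^5 + 12*a^4*c*d^3*l^2 - 54*a^4*c^2*d^2*l^2 + 66*a^4*c^3*d*l^2 - 21*a^4*c^4*l^2 + a^4*b*c^2*d^3 - 2*a^4*b*c^3*d^2 - 4*a^4*b*c^4*d + 5*a^4*b*c^5 + 12*a*b^3*c*d^3*l - 36*a*b^3*c^2*d^2*l + 27*a*b^3*c^3*d*l - 6*a*b^3*c^4*l + 15*a^2*b^2*d^4*l + 36*a^2*b^2*c*d^3*l - 138*a^2*b^2*c^2*d^2*l + 99*a^2*b^2*c^3*d*l - 21*a^2*b^2*c^4*l + 14*a^3*b*d^4*l + 50*a^3*b*c*d^3*l - 161*a^3*b*c^2*d^2*l + 112*a^3*b*c^3*d*l - 24*a^3*b*c^4*l + 24*a^4*c*d^3*l - 60*a^4*c^2*d^2*l + 42*a^4*c^3*d*l - 9*a^4*c^4*l - 9*a*b^2*d^3*l^2 + 39*a*b^2*c*d^2*l^2 - 30*a*b^2*c^2*d*l^2 + 3*a*b^2*c^3*l^2 - 22*a^2*b*d^3*l^2 + 84*a^2*b*c*d^2*l^2 - 54*a^2*b*c^2*d*l^2 + 2*a^2*b*c^3*l^2 - 2*a^2*b^2*c*d^3 + 18*a^2*b^2*c^3*d - 11*a^2*b^2*c^4 - 12*a^3*d^3*l^2 + 42*a^3*c*d^2*l^2 - 27*a^3*c^2*d*l^2 - 4*a^3*b*c*d^3 - 2*a^3*b*c^2*d^2 + 29*a^3*b*c^3*d - 18*a^3*b*c^4 - 3*a^4*c^2*d^2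 + 9*a^4*c^3*d - 6*a^4*c^4 - 18*a*b^2*d^3*l + 27*a*b^2*c*d^2*l - 9*a*b^2*c^2*d*l - 34*a^2*b*d^3*l + 42*a^2*b*c*d^2*l - 12*a^2*b*c^2*d*l + 2*a^2*b*c^3*l - 15*a^3*d^3*l + 18*a^3*c*d^2*l - 3*a^3*c^2*d*l + 3*a*b*d^2*l^2 - 12*a*b*c*d*l^2 + 3*a*b*c^2*l^2 + 6*a*b^2*c*d^2 - 15*a*b^2*c^2*d + 6*a*b^2*c^3 + 3*a^2*d^2*l^2 - 12*a^2*c*d*l^2 + 3*a^2*c^2*l^2 + 2*a^2*b*d^3 + 18*a^2*b*c*d^2 - 42*a^2*b*c^2*d + 14*a^2*b*c^3 + 12*a^3*c*d^2 - 24*a^3*c^2*d + 9*a^3*c^3 + 3*a*b*d^2*l + 6*a*b*c*d*l - 6*a*b*c^2*l + 3*a^2*d^2*l + 6*a^2*c*d*l - 6*a^2*c^2*l - 6*a*b*d^2 + 6*a*b*c*d + 3*a*b*c^2 - 6*a^2*d^2 + 6*a^2*c*d + 3*a^2*c^2) * relp a b c d + (-(a^5*b^3*c^5*d^3) + a^5*b^3*c^7*d - a^4*b^3*c^3*d^4 + 5*a^4*b^3*c^4*d^3 + 6*a^4*b^3*c^5*d^2 - 7*a^4*b^3*c^6*d - a^4*b^3*c^7 - a^5*b^2*c^3*d^4 + 3*a^5*b^2*c^4*d^3 + 5*a^5*b^2*c^5*d^2 - 6*a^5*b^2*c^6*d - a^5*b^2*c^7 - a^4*b^2*c^3*d^3*l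 + a^4*b^2*c^5*d*l + 3*a^3*b^3*c^2*d^4 - 3*a^3*b^3*c^3*d^3 - 27*a^3*b^3*c^4*d^2 + 12*a^3*b^3*c^5*d + 6*a^3*b^3*c^6 + 6*a^4*b^2*c^2*d^4 - 2*a^4*b^2*c^3*d^3 - 47*a^4*b^2*c^4*d^2 + 20*a^4*b^2*c^5*d + 14*a^4*b^2*c^6 + a^5*b*c^2*d^4 + 2*a^5*b*c^3*d^3 - 15*a^5*b*c^4*d^2 + 7*a^5*b*c^5*d + 5*a^5*b*c^6 + 3*a^3*b^2*c^2*d^3*l + 5*a^3*b^2*c^3*d^2*l - 5*a^3*b^2*c^4*d*l - a^3*b^2*c^5*l + a^4*b*c^2*d^3*l + 4*a^4*b*c^3*d^2*l - 4*a^4*b*c^4*d*l - a^4*b*c^5*l - 2*a^2*b^3*c*d^4 - 8*a^2*b^3*c^2*d^3 + 33*a^2*b^3*c^3*d^2 + a^2*b^3*c^4*d - 11*a^2*b^3*c^5 - 9*a^3*b^2*c*d^4 - 29*a^3*b^2*c^2*d^3 + 99*a^3*b^2*c^3*d^2 + 18*a^3*b^2*c^4*d - 47*a^3*b^2*c^5 - 4*a^4*b*c*d^4 - 24*a^4*b*c^2*d^3 + 63*a^4*b*c^3*d^2 + 17*a^4*b*c^4*d - 39*a^4*b*c^5 - 3*a^5*c^2*d^3 + 6*a^5*c^3*d^2 + 3*a^5*c^4*d - 6*a^5*c^5 - 2*a^2*b^2*c*d^3*l - 12*a^2*b^2*c^2*d^2*l + 3*a^2*b^2*c^3*d*l + 4*a^2*b^2*c^4*l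 - 2*a^3*b*c*d^3*l - 17*a^3*b*c^2*d^2*l + 3*a^3*b*c^3*d*l + 9*a^3*b*c^4*l - 3*a^4*c^2*d^2*l + 3*a^4*c^4*l + 6*a*b^3*c*d^3 - 9*a*b^3*c^2*d^2 - 9*a*b^3*c^3*d + 6*a*b^3*c^4 + 3*a^2*b^2*d^4 + 42*a^2*b^2*c*d^3 - 42*a^2*b^2*c^2*d^2 - 90*a^2*b^2*c^3*d + 54*a^2*b^2*c^4 + 3*a^3*b*d^4 + 53*a^3*b*c*d^3 - 38*a^3*b*c^2*d^2 - 128*a^3*b*c^3*d + 77*a^3*b*c^4 + 12*a^4*c*d^3 - 3*a^4*c^2*d^2 - 42*a^4*c^3*d + 27*a^4*c^4 + 6*a*b^2*c*d^2*l + 3*a*b^2*c^2*d*l - 3*a*b^2*c^3*l + a^2*b*d^3*l + 16*a^2*b*c*d^2*l + 14*a^2*b*c^2*d*l - 13*a^2*b*c^3*l + 6*a^3*c*d^2*l + 9*a^3*c^2*d*l - 9*a^3*c^3*l - 9*a*b^2*d^3 - 18*a*b^2*c*d^2 + 54*a*b^2*c^2*d - 18*a*b^2*c^3 - 25*a^2*b*d^3 - 52*a^2*b*c*d^2 + 136*a^2*b*c^2*d - 41*a^2*b*c^3 - 9*a^3*d^3 - 33*a^3*c*d^2 + 75*a^3*c^2*d - 24*a^3*c^3 - 3*a*b*d^2*l - 9*a*b*c*d*l + 3*a*b*c^2*l - 3*a^2*d^2*l - 9*a^2*c*d*l + 3*a^2*c^2*l + 21*a*b*d^2 - 18*a*b*c*d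 - 3*a*b*c^2 + 21*a^2*d^2 - 18*a^2*c*d - 3*a^2*c^2) * fpol a b c d l"
  by (simp add: ellv_def q1v_def Tm_def matA_def matrix_vector_mult_def sum_4 relp_def fpol_def trp_def s2p_def) algebra

lemma id_q3_2:
  "ellv b (q1v a b c d l) * (Tm a b c d *v (matA a b *v (matA a b *v q1v a b c d l)))$2 - ellv b (Tm a b c d *v (matA a b *v (matA a b *v q1v a b c d l))) * (matA a b *v (matA a b *v q1v a b c d l))$2 =
   (a^4*b^4*c^6*d^2*l^2 - a^4*b^4*c^8*l^2 - a^4*b^4*c^4*d^4*l + a^4*b^4*c^6*d^2*l + 2*a^3*b^4*c^4*d^3*l^2 - 6*a^3*b^4*c^5*d^2*l^2 - 6*a^3*b^4*c^6*d*l^2 + 8*a^3*b^4*c^7*l^2 + 2*a^4*b^3*c^4*d^3*l^2 - 4*a^4*b^3*c^5*d^2*l^2 - 5*a^4*b^3*c^6*d*l^2 + 7*a^4*b^3*c^7*l^2 - a^3*b^4*c^2*d^5*l + 4*a^3*b^4*c^3*d^4*l + 7*a^3*b^4*c^4*d^3*l - 7*a^3*b^4*c^5*d^2*l - 2*a^3*b^4*c^6*d*l + a^3*b^4*c^7*l - a^4*b^3*c^2*d^5*l + 2*a^4*b^3*c^3*d^4*l + 6*a^4*b^3*c^4*d^3*l - 6*a^4*b^3*c^5*d^2*l - 2*a^4*b^3*c^6*d*l + a^4*b^3*c^7*l + a^2*b^4*c^2*d^4*l^2 - 8*a^2*b^4*c^3*d^3*l^2 + 3*a^2*b^4*c^4*d^2*l^2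 + 34*a^2*b^4*c^5*d*l^2 - 23*a^2*b^4*c^6*l^2 + a^3*b^3*c^2*d^4*l^2 - 14*a^3*b^3*c^3*d^3*l^2 + 2*a^3*b^3*c^4*d^2*l^2 + 58*a^3*b^3*c^5*d*l^2 - 40*a^3*b^3*c^6*l^2 + a^4*b^2*c^2*d^4*l^2 - 4*a^4*b^2*c^3*d^3*l^2 - 3*a^4*b^2*c^4*d^2*l^2 + 22*a^4*b^2*c^5*d*l^2 - 16*a^4*b^2*c^6*l^2 + 2*a^2*b^4*c*d^5*l + 2*a^2*b^4*c^2*d^4*l - 27*a^2*b^4*c^3*d^3*l + 5*a^2*b^4*c^4*d^2*l + 17*a^2*b^4*c^5*d*l - 6*a^2*b^4*c^6*l + 4*a^3*b^3*c*d^5*l + 6*a^3*b^3*c^2*d^4*l - 43*a^3*b^3*c^3*d^3*l + 6*a^3*b^3*c^4*d^2*l + 31*a^3*b^3*c^5*d*l - 11*a^3*b^3*c^6*l + 5*a^4*b^2*c^2*d^4*l - 14*a^4*b^2*c^3*d^3*l + 14*a^4*b^2*c^5*d*l - 5*a^4*b^2*c^6*l - 2*a*b^4*c*d^4*l^2 + 4*a*b^4*c^2*d^3*l^2 + 24*a*b^4*c^3*d^2*l^2 - 62*a*b^4*c^4*d*l^2 + 28*a*b^4*c^5*l^2 - 4*a^2*b^3*c*d^4*l^2 + 19*a^2*b^3*c^2*d^3*l^2 + 64*a^2*b^3*c^3*d^2*l^2 - 167*a^2*b^3*c^4*d*l^2 + 74*a^2*b^3*c^5*l^2 - 4*a^3*b^2*c*d^4*l^2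 + 8*a^3*b^2*c^2*d^3*l^2 + 56*a^3*b^2*c^3*d^2*l^2 - 126*a^3*b^2*c^4*d*l^2 + 58*a^3*b^2*c^5*l^2 + a^3*b^3*c^4*d^2 - a^3*b^3*c^6 - 3*a^4*b*c^2*d^3*l^2 + 15*a^4*b*c^3*d^2*l^2 - 24*a^4*b*c^4*d*l^2 + 12*a^4*b*c^5*l^2 - 10*a*b^4*c*d^4*l + 17*a*b^4*c^2*d^3*l + 30*a*b^4*c^3*d^2*l - 40*a*b^4*c^4*d*l + 11*a*b^4*c^5*l - 3*a^2*b^3*d^5*l - 30*a^2*b^3*c*d^4*l + 44*a^2*b^3*c^2*d^3*l + 81*a^2*b^3*c^3*d^2*l - 105*a^2*b^3*c^4*d*l + 29*a^2*b^3*c^5*l - 20*a^3*b^2*c*d^4*l + 18*a^3*b^2*c^2*d^3*l + 72*a^3*b^2*c^3*d^2*l - 86*a^3*b^2*c^4*d*l + 24*a^3*b^2*c^5*l - 6*a^4*b*c^2*d^3*l + 21*a^4*b*c^3*d^2*l - 21*a^4*b*c^4*d*l + 6*a^4*b*c^5*l + 6*b^4*c*d^3*l^2 - 27*b^4*c^2*d^2*l^2 + 36*b^4*c^3*d*l^2 - 12*b^4*c^4*l^2 + 3*a*b^3*d^4*l^2 + 8*a*b^3*c*d^3*l^2 - 117*a*b^3*c^2*d^2*l^2 + 156*a*b^3*c^3*d*l^2 - 46*a*b^3*c^4*l^2 + 4*a^2*b^2*d^4*l^2 + 14*a^2*b^2*c*d^3*l^2 - 146*a^2*b^2*c^2*d^2*l^2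 + 186*a^2*b^2*c^3*d*l^2 - 54*a^2*b^2*c^4*l^2 + a^2*b^3*c^2*d^3 - 4*a^2*b^3*c^3*d^2 - 5*a^2*b^3*c^4*d + 6*a^2*b^3*c^5 + 12*a^3*b*c*d^3*l^2 - 54*a^3*b*c^2*d^2*l^2 + 66*a^3*b*c^3*d*l^2 - 21*a^3*b*c^4*l^2 + a^3*b^2*c^2*d^3 - 2*a^3*b^2*c^3*d^2 - 4*a^3*b^2*c^4*d + 5*a^3*b^2*c^5 + 12*b^4*c*d^3*l - 36*b^4*c^2*d^2*l + 27*b^4*c^3*d*l - 6*b^4*c^4*l + 15*a*b^3*d^4*l + 36*a*b^3*c*d^3*l - 138*a*b^3*c^2*d^2*l + 99*a*b^3*c^3*d*l - 21*a*b^3*c^4*l + 14*a^2*b^2*d^4*l + 50*a^2*b^2*c*d^3*l - 161*a^2*b^2*c^2*d^2*l + 112*a^2*b^2*c^3*d*l - 24*a^2*b^2*c^4*l + 24*a^3*b*c*d^3*l - 60*a^3*b*c^2*d^2*l + 42*a^3*b*c^3*d*l - 9*a^3*b*c^4*l - 9*b^3*d^3*l^2 + 39*b^3*c*d^2*l^2 - 30*b^3*c^2*d*l^2 + 3*b^3*c^3*l^2 - 22*a*b^2*d^3*l^2 + 84*a*b^2*c*d^2*l^2 - 54*a*b^2*c^2*d*l^2 + 2*a*b^2*c^3*l^2 - 2*a*b^3*c*d^3 + 18*a*b^3*c^3*d - 11*a*b^3*c^4 - 12*a^2*b*d^3*l^2 + 42*a^2*b*c*d^2*l^2 - 27*a^2*b*c^2*d*l^2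 - 4*a^2*b^2*c*d^3 - 2*a^2*b^2*c^2*d^2 + 29*a^2*b^2*c^3*d - 18*a^2*b^2*c^4 - 3*a^3*b*c^2*d^2 + 9*a^3*b*c^3*d - 6*a^3*b*c^4 - 18*b^3*d^3*l + 27*b^3*c*d^2*l - 9*b^3*c^2*d*l - 34*a*b^2*d^3*l + 42*a*b^2*c*d^2*l - 12*a*b^2*c^2*d*l + 2*a*b^2*c^3*l - 15*a^2*b*d^3*l + 18*a^2*b*c*d^2*l - 3*a^2*b*c^2*d*l + 3*b^2*d^2*l^2 - 12*b^2*c*d*l^2 + 3*b^2*c^2*l^2 + 6*b^3*c*d^2 - 15*b^3*c^2*d + 6*b^3*c^3 + 3*a*b*d^2*l^2 - 12*a*b*c*d*l^2 + 3*a*b*c^2*l^2 + 2*a*b^2*d^3 + 18*a*b^2*c*d^2 - 42*a*b^2*c^2*d + 14*a*b^2*c^3 + 12*a^2*b*c*d^2 - 24*a^2*b*c^2*d + 9*a^2*b*c^3 + 3*b^2*d^2*l + 6*b^2*c*d*l - 6*b^2*c^2*l + 3*a*b*d^2*l + 6*a*b*c*d*l - 6*a*b*c^2*l - 6*b^2*d^2 + 6*b^2*c*d + 3*b^2*c^2 - 6*a*b*d^2 + 6*a*b*c*d + 3*a*b*c^2) * relp a b c d + (-(a^4*b^4*c^5*d^3) + a^4*b^4*c^7*d - a^3*b^4*c^3*d^4 + 5*a^3*b^4*c^4*d^3 + 6*a^3*b^4*c^5*d^2 - 7*a^3*b^4*c^6*d - a^3*b^4*c^7 - a^4*b^3*c^3*d^4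 + 3*a^4*b^3*c^4*d^3 + 5*a^4*b^3*c^5*d^2 - 6*a^4*b^3*c^6*d - a^4*b^3*c^7 - a^3*b^3*c^3*d^3*l + a^3*b^3*c^5*d*l + 3*a^2*b^4*c^2*d^4 - 3*a^2*b^4*c^3*d^3 - 27*a^2*b^4*c^4*d^2 + 12*a^2*b^4*c^5*d + 6*a^2*b^4*c^6 + 6*a^3*b^3*c^2*d^4 - 2*a^3*b^3*c^3*d^3 - 47*a^3*b^3*c^4*d^2 + 20*a^3*b^3*c^5*d + 14*a^3*b^3*c^6 + a^4*b^2*c^2*d^4 + 2*a^4*b^2*c^3*d^3 - 15*a^4*b^2*c^4*d^2 + 7*a^4*b^2*c^5*d + 5*a^4*b^2*c^6 + 3*a^2*b^3*c^2*d^3*l + 5*a^2*b^3*c^3*d^2*l - 5*a^2*b^3*c^4*d*l - a^2*b^3*c^5*l + a^3*b^2*c^2*d^3*l + 4*a^3*b^2*c^3*d^2*l - 4*a^3*b^2*c^4*d*l - a^3*b^2*c^5*l - 2*a*b^4*c*d^4 - 8*a*b^4*c^2*d^3 + 33*a*b^4*c^3*d^2 + a*b^4*c^4*d - 11*a*b^4*c^5 - 9*a^2*b^3*c*d^4 - 29*a^2*b^3*c^2*d^3 + 99*a^2*b^3*c^3*d^2 + 18*a^2*b^3*c^4*d - 47*a^2*b^3*c^5 - 4*a^3*b^2*c*d^4 - 24*a^3*b^2*c^2*d^3 + 63*a^3*b^2*c^3*d^2 + 17*a^3*b^2*c^4*d - 39*a^3*b^2*c^5 - 3*a^4*b*c^2*d^3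 + 6*a^4*b*c^3*d^2 + 3*a^4*b*c^4*d - 6*a^4*b*c^5 - 2*a*b^3*c*d^3*l - 12*a*b^3*c^2*d^2*l + 3*a*b^3*c^3*d*l + 4*a*b^3*c^4*l - 2*a^2*b^2*c*d^3*l - 17*a^2*b^2*c^2*d^2*l + 3*a^2*b^2*c^3*d*l + 9*a^2*b^2*c^4*l - 3*a^3*b*c^2*d^2*l + 3*a^3*b*c^4*l + 6*b^4*c*d^3 - 9*b^4*c^2*d^2 - 9*b^4*c^3*d + 6*b^4*c^4 + 3*a*b^3*d^4 + 42*a*b^3*c*d^3 - 42*a*b^3*c^2*d^2 - 90*a*b^3*c^3*d + 54*a*b^3*c^4 + 3*a^2*b^2*d^4 + 53*a^2*b^2*c*d^3 - 38*a^2*b^2*c^2*d^2 - 128*a^2*b^2*c^3*d + 77*a^2*b^2*c^4 + 12*a^3*b*c*d^3 - 3*a^3*b*c^2*d^2 - 42*a^3*b*c^3*d + 27*a^3*b*c^4 + 6*b^3*c*d^2*l + 3*b^3*c^2*d*l - 3*b^3*c^3*l + a*b^2*d^3*l + 16*a*b^2*c*d^2*l + 14*a*b^2*c^2*d*l - 13*a*b^2*c^3*l + 6*a^2*b*c*d^2*l + 9*a^2*b*c^2*d*l - 9*a^2*b*c^3*l - 9*b^3*d^3 - 18*b^3*c*d^2 + 54*b^3*c^2*d - 18*b^3*c^3 - 25*a*b^2*d^3 - 52*a*b^2*c*d^2 + 136*a*b^2*c^2*d - 41*a*b^2*c^3 - 9*a^2*b*d^3 - 33*a^2*b*c*d^2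 + 75*a^2*b*c^2*d - 24*a^2*b*c^3 - 3*b^2*d^2*l - 9*b^2*c*d*l + 3*b^2*c^2*l - 3*a*b*d^2*l - 9*a*b*c*d*l + 3*a*b*c^2*l + 21*b^2*d^2 - 18*b^2*c*d - 3*b^2*c^2 + 21*a*b*d^2 - 18*a*b*c*d - 3*a*b*c^2) * fpol a b c d l"
  by (simp add: ellv_def q1v_def Tm_def matA_def matrix_vector_mult_def sum_4 relp_def fpol_def trp_def s2p_def) algebra

lemma id_q3_3:
  "ellv b (q1v a b c d l) * (Tm a b c d *v (matA a b *v (matA a b *v q1v a b c d l)))$3 - ellv b (Tm a b c d *v (matA a b *v (matA a b *v q1v a b c d l))) * (matA a b *v (matA a b *v q1v a b c d l))$3 =
   (-(2*a^4*b^3*c^6*d^2*l^2) - a^4*b^3*c^7*d*l^2 + a^4*b^3*c^8*l^2 + 2*a^4*b^3*c^4*d^4*l + a^4*b^3*c^5*d^3*l - a^4*b^3*c^6*d^2*l - 4*a^3*b^3*c^4*d^3*l^2 + 9*a^3*b^3*c^5*d^2*l^2 + 15*a^3*b^3*c^6*d*l^2 - 7*a^3*b^3*c^7*l^2 - 4*a^4*b^2*c^4*d^3*l^2 + 6*a^4*b^2*c^5*d^2*l^2 + 12*a^4*b^2*c^6*d*l^2 - 7*a^4*b^2*c^7*l^2 + 2*a^3*b^3*c^2*d^5*l - 6*a^3*b^3*c^3*d^4*l - 16*a^3*b^3*c^4*d^3*l + 5*a^3*b^3*c^5*d^2*l + 3*a^3*b^3*c^6*d*l - a^3*b^3*c^7*l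 + 2*a^4*b^2*c^2*d^5*l - 3*a^4*b^2*c^3*d^4*l - 13*a^4*b^2*c^4*d^3*l + 5*a^4*b^2*c^5*d^2*l + 3*a^4*b^2*c^6*d*l - a^4*b^2*c^7*l - 2*a^2*b^3*c^2*d^4*l^2 + 13*a^2*b^3*c^3*d^3*l^2 + 3*a^2*b^3*c^4*d^2*l^2 - 59*a^2*b^3*c^5*d*l^2 + 16*a^2*b^3*c^6*l^2 - 2*a^3*b^2*c^2*d^4*l^2 + 26*a^3*b^2*c^3*d^3*l^2 + 11*a^3*b^2*c^4*d^2*l^2 - 100*a^3*b^2*c^5*d*l^2 + 34*a^3*b^2*c^6*l^2 - 2*a^4*b*c^2*d^4*l^2 + 7*a^4*b*c^3*d^3*l^2 + 9*a^4*b*c^4*d^2*l^2 - 38*a^4*b*c^5*d*l^2 + 16*a^4*b*c^6*l^2 - 3*a^2*b^3*c*d^5*l - 7*a^2*b^3*c^2*d^4*l + 44*a^2*b^3*c^3*d^3*l + 12*a^2*b^3*c^4*d^2*l - 22*a^2*b^3*c^5*d*l + 5*a^2*b^3*c^6*l - 8*a^3*b^2*c*d^5*l - 17*a^3*b^2*c^2*d^4*l + 70*a^3*b^2*c^3*d^3*l + 19*a^3*b^2*c^4*d^2*l - 41*a^3*b^2*c^5*d*l + 10*a^3*b^2*c^6*l - 10*a^4*b*c^2*d^4*l + 23*a^4*b*c^3*d^3*l + 9*a^4*b*c^4*d^2*l - 19*a^4*b*c^5*d*l + 5*a^4*b*c^6*l + 3*a*b^3*c*d^4*l^2 - 3*a*b^3*c^2*d^3*l^2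 - 45*a*b^3*c^3*d^2*l^2 + 84*a*b^3*c^4*d*l^2 - 12*a*b^3*c^5*l^2 + 8*a^2*b^2*c*d^4*l^2 - 28*a^2*b^2*c^2*d^3*l^2 - 135*a^2*b^2*c^3*d^2*l^2 + 233*a^2*b^2*c^4*d*l^2 - 46*a^2*b^2*c^5*l^2 + 8*a^3*b*c*d^4*l^2 - 11*a^3*b*c^2*d^3*l^2 - 114*a^3*b*c^3*d^2*l^2 + 182*a^3*b*c^4*d*l^2 - 47*a^3*b*c^5*l^2 - 2*a^3*b^2*c^4*d^2 - a^3*b^2*c^5*d + a^3*b^2*c^6 + 6*a^4*c^2*d^3*l^2 - 27*a^4*c^3*d^2*l^2 + 36*a^4*c^4*d*l^2 - 12*a^4*c^5*l^2 + 15*a*b^3*c*d^4*l - 15*a*b^3*c^2*d^3*l - 63*a*b^3*c^3*d^2*l + 42*a*b^3*c^4*d*l - 6*a*b^3*c^5*l + 5*a^2*b^2*d^5*l + 58*a^2*b^2*c*d^4*l - 41*a^2*b^2*c^2*d^3*l - 163*a^2*b^2*c^3*d^2*l + 118*a^2*b^2*c^4*d*l - 20*a^2*b^2*c^5*l + 40*a^3*b*c*d^4*l - 11*a^3*b*c^2*d^3*l - 135*a^3*b*c^3*d^2*l + 103*a^3*b*c^4*d*l - 20*a^3*b*c^5*l + 12*a^4*c^2*d^3*l - 36*a^4*c^3*d^2*l + 27*a^4*c^4*d*l - 6*a^4*c^5*l - 9*b^3*c*d^3*l^2 + 36*b^3*c^2*d^2*l^2 - 36*b^3*c^3*d*l^2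 - 5*a*b^2*d^4*l^2 - 20*a*b^2*c*d^3*l^2 + 192*a*b^2*c^2*d^2*l^2 - 170*a*b^2*c^3*d*l^2 + 10*a*b^2*c^4*l^2 - 8*a^2*b*d^4*l^2 - 36*a^2*b*c*d^3*l^2 + 252*a^2*b*c^2*d^2*l^2 - 218*a^2*b*c^3*d*l^2 + 24*a^2*b*c^4*l^2 - 2*a^2*b^2*c^2*d^3 + 6*a^2*b^2*c^3*d^2 + 12*a^2*b^2*c^4*d - 5*a^2*b^2*c^5 - 24*a^3*c*d^3*l^2 + 93*a^3*c^2*d^2*l^2 - 84*a^3*c^3*d*l^2 + 15*a^3*c^4*l^2 - 2*a^3*b*c^2*d^3 + 3*a^3*b*c^3*d^2 + 9*a^3*b*c^4*d - 5*a^3*b*c^5 - 18*b^3*c*d^3*l + 45*b^3*c^2*d^2*l - 18*b^3*c^3*d*l - 25*a*b^2*d^4*l - 79*a*b^2*c*d^3*l + 192*a*b^2*c^2*d^2*l - 82*a*b^2*c^3*d*l + 5*a*b^2*c^4*l - 22*a^2*b*d^4*l - 113*a^2*b*c*d^3*l + 234*a^2*b*c^2*d^2*l - 106*a^2*b*c^3*d*l + 10*a^2*b*c^4*l - 48*a^3*c*d^3*l + 90*a^3*c^2*d^2*l - 45*a^3*c^3*d*l + 6*a^3*c^4*l + 15*b^2*d^3*l^2 - 54*b^2*c*d^2*l^2 + 18*b^2*c^2*d*l^2 + 6*b^2*c^3*l^2 + 42*a*b*d^3*l^2 - 117*a*b*c*d^2*l^2 + 27*a*b*c^2*d*l^2 +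 15*a*b*c^3*l^2 + 3*a*b^2*c*d^3 + 3*a*b^2*c^2*d^2 - 30*a*b^2*c^3*d + 6*a*b^2*c^4 + 24*a^2*d^3*l^2 - 60*a^2*c*d^2*l^2 + 15*a^2*c^2*d*l^2 + 9*a^2*c^3*l^2 + 8*a^2*b*c*d^3 + 9*a^2*b*c^2*d^2 - 48*a^2*b*c^3*d + 14*a^2*b*c^4 + 6*a^3*c^2*d^2 - 15*a^3*c^3*d + 6*a^3*c^4 + 30*b^2*d^3*l - 27*b^2*c*d^2*l + 3*b^2*c^3*l + 51*a*b*d^3*l - 27*a*b*c*d^2*l - 9*a*b*c^2*d*l + 6*a*b*c^3*l + 21*a^2*d^3*l - 6*a^2*c*d^2*l - 12*a^2*c^2*d*l + 6*a^2*c^3*l - 9*b*d^2*l^2 + 18*b*c*d*l^2 - 9*b^2*c*d^2 + 18*b^2*c^2*d - 9*a*d^2*l^2 + 18*a*c*d*l^2 - 3*a*b*d^3 - 36*a*b*c*d^2 + 54*a*b*c^2*d - 3*a*b*c^3 - 24*a^2*c*d^2 + 33*a^2*c^2*d - 6*a^2*c^3 - 18*b*c*d*l + 9*b*c^2*l - 18*a*c*d*l + 9*a*c^2*l + 9*b*d^2 - 9*b*c^2 + 9*a*d^2 - 9*a*c^2) * relp a b c d + (2*a^4*b^3*c^5*d^3 + a^4*b^3*c^6*d^2 - a^4*b^3*c^7*d + 2*a^3*b^3*c^3*d^4 - 8*a^3*b^3*c^4*d^3 - 15*a^3*b^3*c^5*d^2 + 5*a^3*b^3*c^6*d + a^3*b^3*c^7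 + 2*a^4*b^2*c^3*d^4 - 5*a^4*b^2*c^4*d^3 - 12*a^4*b^2*c^5*d^2 + 5*a^4*b^2*c^6*d + a^4*b^2*c^7 + 2*a^3*b^2*c^3*d^3*l + a^3*b^2*c^4*d^2*l - a^3*b^2*c^5*d*l - 5*a^2*b^3*c^2*d^4 + a^2*b^3*c^3*d^3 + 48*a^2*b^3*c^4*d^2 + a^2*b^3*c^5*d - 5*a^2*b^3*c^6 - 12*a^3*b^2*c^2*d^4 - 4*a^3*b^2*c^3*d^3 + 84*a^3*b^2*c^4*d^2 - 13*a^3*b^2*c^6 - 2*a^4*b*c^2*d^4 - 5*a^4*b*c^3*d^3 + 27*a^4*b*c^4*d^2 - 2*a^4*b*c^5*d - 5*a^4*b*c^6 - 5*a^2*b^2*c^2*d^3*l - 12*a^2*b^2*c^3*d^2*l + 3*a^2*b^2*c^4*d*l + a^2*b^2*c^5*l - 2*a^3*b*c^2*d^3*l - 9*a^3*b*c^3*d^2*l + 3*a^3*b*c^4*d*l + a^3*b*c^5*l + 3*a*b^3*c*d^4 + 15*a*b^3*c^2*d^3 - 45*a*b^3*c^3*d^2 - 24*a*b^3*c^4*d + 6*a*b^3*c^5 + 16*a^2*b^2*c*d^4 + 65*a^2*b^2*c^2*d^3 - 138*a^2*b^2*c^3*d^2 - 89*a^2*b^2*c^4*d + 35*a^2*b^2*c^5 + 8*a^3*b*c*d^4 + 53*a^3*b*c^2*d^3 - 90*a^3*b*c^3*d^2 - 64*a^3*b*c^4*d + 35*a^3*b*c^5 + 6*a^4*c^2*d^3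 - 9*a^4*c^3*d^2 - 9*a^4*c^4*d + 6*a^4*c^5 + 3*a*b^2*c*d^3*l + 21*a*b^2*c^2*d^2*l + 6*a*b^2*c^3*d*l - 3*a*b^2*c^4*l + 3*a^2*b*c*d^3*l + 31*a^2*b*c^2*d^2*l + 11*a^2*b*c^3*d*l - 8*a^2*b*c^4*l + 6*a^3*c^2*d^2*l + 3*a^3*c^3*d*l - 3*a^3*c^4*l - 9*b^3*c*d^3 + 9*b^3*c^2*d^2 + 18*b^3*c^3*d - 5*a*b^2*d^4 - 74*a*b^2*c*d^3 + 24*a*b^2*c^2*d^2 + 160*a*b^2*c^3*d - 23*a*b^2*c^4 - 5*a^2*b*d^4 - 101*a^2*b*c*d^3 + 5*a^2*b*c^2*d^2 + 221*a^2*b*c^3*d - 51*a^2*b*c^4 - 24*a^3*c*d^3 - 9*a^3*c^2*d^2 + 72*a^3*c^3*d - 24*a^3*c^4 - 9*b^2*c*d^2*l - 9*b^2*c^2*d*l - a*b*d^3*l - 24*a*b*c*d^2*l - 36*a*b*c^2*d*l + 5*a*b*c^3*l - 9*a^2*c*d^2*l - 21*a^2*c^2*d*l + 6*a^2*c^3*l + 15*b^2*d^3 + 36*b^2*c*d^2 - 63*b^2*c^2*d - 3*b^2*c^3 + 40*a*b*d^3 + 117*a*b*c*d^2 - 165*a*b*c^2*d + a*b*c^3 + 15*a^2*d^3 + 72*a^2*c*d^2 - 96*a^2*c^2*d + 9*a^2*c^3 + 3*b*d^2*l + 15*b*c*d*l + 3*b*c^2*l + 3*a*d^2*l + 15*a*c*d*l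 + 3*a*c^2*l - 30*b*d^2 + 3*b*c*d + 15*b*c^2 - 30*a*d^2 + 3*a*c*d + 15*a*c^2) * fpol a b c d l"
  by (simp add: ellv_def q1v_def Tm_def matA_def matrix_vector_mult_def sum_4 relp_def fpol_def trp_def s2p_def) algebra

lemma id_q3_4:
  "ellv b (q1v a b c d l) * (Tm a b c d *v (matA a b *v (matA a b *v q1v a b c d l)))$4 - ellv b (Tm a b c d *v (matA a b *v (matA a b *v q1v a b c d l))) * (matA a b *v (matA a b *v q1v a b c d l))$4 =
   (-(a^4*b^3*c^6*d^2*l^2) + a^4*b^3*c^7*d*l^2 + 2*a^4*b^3*c^8*l^2 + a^4*b^3*c^4*d^4*l - a^4*b^3*c^5*d^3*l - 2*a^4*b^3*c^6*d^2*l - 2*a^3*b^3*c^4*d^3*l^2 + 9*a^3*b^3*c^5*d^2*l^2 + 3*a^3*b^3*c^6*d*l^2 - 17*a^3*b^3*c^7*l^2 - 2*a^4*b^2*c^4*d^3*l^2 + 6*a^4*b^2*c^5*d^2*l^2 + 3*a^4*b^2*c^6*d*l^2 - 14*a^4*b^2*c^7*l^2 + a^3*b^3*c^2*d^5*l - 6*a^3*b^3*c^3*d^4*l - 5*a^3*b^3*c^4*d^3*l + 16*a^3*b^3*c^5*d^2*l + 3*a^3*b^3*c^6*d*l - 2*a^3*b^3*c^7*l + a^4*b^2*c^2*d^5*l - 3*a^4*b^2*c^3*d^4*l - 5*a^4*b^2*c^4*d^3*l + 13*a^4*b^2*c^5*d^2*l + 3*a^4*b^2*c^6*d*l - 2*a^4*b^2*c^7*l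 - a^2*b^3*c^2*d^4*l^2 + 11*a^2*b^3*c^3*d^3*l^2 - 12*a^2*b^3*c^4*d^2*l^2 - 43*a^2*b^3*c^5*d*l^2 + 53*a^2*b^3*c^6*l^2 - a^3*b^2*c^2*d^4*l^2 + 16*a^3*b^2*c^3*d^3*l^2 - 17*a^3*b^2*c^4*d^2*l^2 - 74*a^3*b^2*c^5*d*l^2 + 86*a^3*b^2*c^6*l^2 - a^4*b*c^2*d^4*l^2 + 5*a^4*b*c^3*d^3*l^2 - 28*a^4*b*c^5*d*l^2 + 32*a^4*b*c^6*l^2 - 3*a^2*b^3*c*d^5*l + a^2*b^3*c^2*d^4*l + 37*a^2*b^3*c^3*d^3*l - 27*a^2*b^3*c^4*d^2*l - 29*a^2*b^3*c^5*d*l + 13*a^2*b^3*c^6*l - 4*a^3*b^2*c*d^5*l - a^3*b^2*c^2*d^4*l + 59*a^3*b^2*c^3*d^3*l - 37*a^3*b^2*c^4*d^2*l - 52*a^3*b^2*c^5*d*l + 23*a^3*b^2*c^6*l - 5*a^4*b*c^2*d^4*l + 19*a^4*b*c^3*d^3*l - 9*a^4*b*c^4*d^2*l - 23*a^4*b*c^5*d*l + 10*a^4*b*c^6*l + 3*a*b^3*c*d^4*l^2 - 9*a*b^3*c^2*d^3*l^2 - 27*a*b^3*c^3*d^2*l^2 + 102*a*b^3*c^4*d*l^2 - 72*a*b^3*c^5*l^2 + 4*a^2*b^2*c*d^4*l^2 - 29*a^2*b^2*c^2*d^3*l^2 - 57*a^2*b^2*c^3*d^2*l^2 + 268*a^2*b^2*c^4*d*l^2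 - 176*a^2*b^2*c^5*l^2 + 4*a^3*b*c*d^4*l^2 - 13*a^3*b*c^2*d^3*l^2 - 54*a^3*b*c^3*d^2*l^2 + 196*a^3*b*c^4*d*l^2 - 127*a^3*b*c^5*l^2 - a^3*b^2*c^4*d^2 + a^3*b^2*c^5*d + 2*a^3*b^2*c^6 + 3*a^4*c^2*d^3*l^2 - 18*a^4*c^3*d^2*l^2 + 36*a^4*c^4*d*l^2 - 24*a^4*c^5*l^2 + 15*a*b^3*c*d^4*l - 36*a*b^3*c^2*d^3*l - 27*a*b^3*c^3*d^2*l + 78*a*b^3*c^4*d*l - 27*a*b^3*c^5*l + 4*a^2*b^2*d^5*l + 32*a^2*b^2*c*d^4*l - 91*a^2*b^2*c^2*d^3*l - 80*a^2*b^2*c^3*d^2*l + 197*a^2*b^2*c^4*d*l - 67*a^2*b^2*c^5*l + 20*a^3*b*c*d^4*l - 43*a^3*b*c^2*d^3*l - 81*a^3*b*c^3*d^2*l + 155*a^3*b*c^4*d*l - 52*a^3*b*c^5*l + 6*a^4*c^2*d^3*l - 27*a^4*c^3*d^2*l + 36*a^4*c^4*d*l - 12*a^4*c^5*l - 9*b^3*c*d^3*l^2 + 45*b^3*c^2*d^2*l^2 - 72*b^3*c^3*d*l^2 + 36*b^3*c^4*l^2 - 4*a*b^2*d^4*l^2 - 4*a*b^2*c*d^3*l^2 + 159*a*b^2*c^2*d^2*l^2 - 298*a*b^2*c^3*d*l^2 + 128*a*b^2*c^4*l^2 - 4*a^2*b*d^4*l^2 - 6*a^2*b*c*d^3*l^2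 + 186*a^2*b*c^2*d^2*l^2 - 340*a^2*b*c^3*d*l^2 + 138*a^2*b*c^4*l^2 - a^2*b^2*c^2*d^3 + 6*a^2*b^2*c^3*d^2 + 3*a^2*b^2*c^4*d - 13*a^2*b^2*c^5 - 12*a^3*c*d^3*l^2 + 69*a^3*c^2*d^2*l^2 - 114*a^3*c^3*d*l^2 + 48*a^3*c^4*l^2 - a^3*b*c^2*d^3 + 3*a^3*b*c^3*d^2 + 3*a^3*b*c^4*d - 10*a^3*b*c^5 - 18*b^3*c*d^3*l + 63*b^3*c^2*d^2*l - 63*b^3*c^3*d*l + 18*b^3*c^4*l - 20*a*b^2*d^4*l - 29*a*b^2*c*d^3*l + 222*a*b^2*c^2*d^2*l - 215*a*b^2*c^3*d*l + 58*a*b^2*c^4*l - 20*a^2*b*d^4*l - 37*a^2*b*c*d^3*l + 249*a^2*b*c^2*d^2*l - 230*a^2*b*c^3*d*l + 62*a^2*b*c^4*l - 24*a^3*c*d^3*l + 90*a^3*c^2*d^2*l - 81*a^3*c^3*d*l + 21*a^3*c^4*l + 12*b^2*d^3*l^2 - 63*b^2*c*d^2*l^2 + 72*b^2*c^2*d*l^2 - 15*b^2*c^3*l^2 + 24*a*b*d^3*l^2 - 135*a*b*c*d^2*l^2 + 135*a*b*c^2*d*l^2 - 21*a*b*c^3*l^2 + 3*a*b^2*c*d^3 - 3*a*b^2*c^2*d^2 - 24*a*b^2*c^3*d + 27*a*b^2*c^4 + 12*a^2*d^3*l^2 - 66*a^2*c*d^2*l^2 + 66*a^2*c^2*d*l^2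 - 9*a^2*c^3*l^2 + 4*a^2*b*c*d^3 - 3*a^2*b*c^2*d^2 - 39*a^2*b*c^3*d + 40*a^2*b*c^4 + 3*a^3*c^2*d^2 - 12*a^3*c^3*d + 12*a^3*c^4 + 24*b^2*d^3*l - 54*b^2*c*d^2*l + 27*b^2*c^2*d*l - 3*b^2*c^3*l + 51*a*b*d^3*l - 99*a*b*c*d^2*l + 45*a*b*c^2*d*l - 12*a*b*c^3*l + 24*a^2*d^3*l - 48*a^2*c*d^2*l + 21*a^2*c^2*d*l - 6*a^2*c^3*l + 18*b*c*d*l^2 - 9*b*c^2*l^2 - 9*b^2*c*d^2 + 27*b^2*c^2*d - 18*b^2*c^3 + 18*a*c*d*l^2 - 9*a*c^2*l^2 - 3*a*b*d^3 - 18*a*b*c*d^2 + 72*a*b*c^2*d - 39*a*b*c^3 - 12*a^2*c*d^2 + 39*a^2*c^2*d - 21*a^2*c^3 - 9*b*d^2*l + 9*b*c^2*l - 9*a*d^2*l + 9*a*c^2*l + 9*b*d^2 - 18*b*c*d + 9*a*d^2 - 18*a*c*d) * relp a b c d + (a^4*b^3*c^5*d^3 - a^4*b^3*c^6*d^2 - 2*a^4*b^3*c^7*d + a^3*b^3*c^3*d^4 - 7*a^3*b^3*c^4*d^3 - 3*a^3*b^3*c^5*d^2 + 16*a^3*b^3*c^6*d + 2*a^3*b^3*c^7 + a^4*b^2*c^3*d^4 - 4*a^4*b^2*c^4*d^3 - 3*a^4*b^2*c^5*d^2 + 13*a^4*b^2*c^6*d + 2*a^4*b^2*c^7 + a^3*b^2*c^3*d^3*l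 - a^3*b^2*c^4*d^2*l - 2*a^3*b^2*c^5*d*l - 4*a^2*b^3*c^2*d^4 + 8*a^2*b^3*c^3*d^3 + 33*a^2*b^3*c^4*d^2 - 37*a^2*b^3*c^5*d - 13*a^2*b^3*c^6 - 6*a^3*b^2*c^2*d^4 + 10*a^3*b^2*c^3*d^3 + 57*a^3*b^2*c^4*d^2 - 60*a^3*b^2*c^5*d - 29*a^3*b^2*c^6 - a^4*b*c^2*d^4 - a^4*b*c^3*d^3 + 18*a^4*b*c^4*d^2 - 19*a^4*b*c^5*d - 10*a^4*b*c^6 - 4*a^2*b^2*c^2*d^3*l - 3*a^2*b^2*c^3*d^2*l + 12*a^2*b^2*c^4*d*l + 2*a^2*b^2*c^5*l - a^3*b*c^2*d^3*l - 3*a^3*b*c^3*d^2*l + 9*a^3*b*c^4*d*l + 2*a^3*b*c^5*l + 3*a*b^3*c*d^4 + 9*a*b^3*c^2*d^3 - 54*a*b^3*c^3*d^2 + 21*a*b^3*c^4*d + 27*a*b^3*c^5 + 11*a^2*b^2*c*d^4 + 22*a^2*b^2*c^2*d^3 - 159*a^2*b^2*c^3*d^2 + 35*a^2*b^2*c^4*d + 106*a^2*b^2*c^5 + 4*a^3*b*c*d^4 + 19*a^3*b*c^2*d^3 - 99*a^3*b*c^3*d^2 + 13*a^3*b*c^4*d + 82*a^3*b*c^5 + 3*a^4*c^2*d^3 - 9*a^4*c^3*d^2 + 12*a^4*c^5 + 3*a*b^2*c*d^3*l + 15*a*b^2*c^2*d^2*l - 15*a*b^2*c^3*d*l - 9*a*b^2*c^4*l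 + 3*a^2*b*c*d^3*l + 20*a^2*b*c^2*d^2*l - 20*a^2*b*c^3*d*l - 19*a^2*b*c^4*l + 3*a^3*c^2*d^2*l - 3*a^3*c^3*d*l - 6*a^3*c^4*l - 9*b^3*c*d^3 + 18*b^3*c^2*d^2 + 9*b^3*c^3*d - 18*b^3*c^4 - 4*a*b^2*d^4 - 52*a*b^2*c*d^3 + 102*a*b^2*c^2*d^2 + 110*a*b^2*c^3*d - 139*a*b^2*c^4 - 4*a^2*b*d^4 - 58*a^2*b*c*d^3 + 109*a^2*b*c^2*d^2 + 163*a^2*b*c^3*d - 180*a^2*b*c^4 - 12*a^3*c*d^3 + 18*a^3*c^2*d^2 + 54*a^3*c^3*d - 57*a^3*c^4 - 9*b^2*c*d^2*l + 9*b^2*c^3*l - 2*a*b*d^3*l - 24*a*b*c*d^2*l - 6*a*b*c^2*d*l + 34*a*b*c^3*l - 9*a^2*c*d^2*l - 6*a^2*c^2*d*l + 21*a^2*c^3*l + 12*b^2*d^3 + 18*b^2*c*d^2 - 99*b^2*c^2*d + 57*b^2*c^3 + 35*a*b*d^3 + 39*a*b*c*d^2 - 243*a*b*c^2*d + 122*a*b*c^3 + 12*a^2*d^3 + 27*a^2*c*d^2 - 129*a^2*c^2*d + 63*a^2*c^3 + 6*b*d^2*l + 12*b*c*d*l - 12*b*c^2*l + 6*a*d^2*l + 12*a*c*d*l - 12*a*c^2*l - 33*b*d^2 + 51*b*c*d - 6*b*c^2 - 33*a*d^2 + 51*a*c*d - 6*a*c^2) * fpol a b c d l"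
  by (simp add: ellv_def q1v_def Tm_def matA_def matrix_vector_mult_def sum_4 relp_def fpol_def trp_def s2p_def) algebra

lemma root_pos:
  fixes t s m :: real
  assumes "t > 0" "s > 0" "m^3 - t*m^2 + s*m - 1 = 0"
  shows "m > 0"
proof (rule ccontr)
  assume "\<not> m > 0"
  then have m0: "m \<le> 0" by simp
  have "m^3 \<le> 0" using m0 by (simp add: power_le_zero_eq)
  moreover have "t*m^2 \<ge> 0" using assms(1) by simp
  moreover have "s*m \<le> 0" using assms(2) m0 by (simp add: mult_nonneg_nonpos)
  ultimately show False using assms(3) by linarith
qed

lemma cube_eq_1:
  fixes l :: real
  assumes "l^3 = 1" shows "l = 1"
proof -
  have "(l-1)*(l^2+l+1) = 0" using assms by (simp add: power2_eq_square power3_eq_cube algebra_simps)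
  moreover have "l^2+l+1 > 0"
  proof -
    have "4*(l^2+l+1) = (2*l+1)^2 + 3" by (simp add: power2_eq_square algebra_simps)
    moreover have "(2*l+1)^2 + 3 > (0::real)" by (simp add: add_nonneg_pos)
    ultimately show ?thesis by simp
  qed
  ultimately show ?thesis by simp
qed

lemma root_exists:
  fixes t s :: real
  assumes t3: "t > 3" and s3: "s > 3"
  shows "\<exists>l. l^3 - t*l^2 + s*l - 1 = 0 \<and> l \<noteq> 1 \<and> 3*l^2 - 2*t*l + s \<noteq> 0"
proof (cases "s = t")
  case True
  define r where "r = sqrt ((t-1)^2 - 4)"
  have pos: "(t-1)^2 - 4 > 0"
  proof -
    have "t - 1 > 2" using t3 by simp
    then have "(t-1)^2 > 2^2" by (rule power_strict_mono) auto
    then show ?thesis by simp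
  qed
  have rp: "r > 0" unfolding r_def using pos by simp
  have r2: "r^2 = (t-1)^2 - 4" unfolding r_def using pos by simp
  define l where "l = ((t-1) + r)/2"
  have q: "l^2 - (t-1)*l + 1 = 0" unfolding l_def using r2 by (simp add: power2_eq_square field_simps)
  have "l^3 - t*l^2 + s*l - 1 = (l-1)*(l^2 - (t-1)*l + 1)" using True by (simp add: power2_eq_square power3_eq_cube algebra_simps)
  then have f0: "l^3 - t*l^2 + s*l - 1 = 0" using q by simp
  have l1: "l \<noteq> 1"
  proof
    assume "l = 1"
    then show False using q t3 by simp
  qed
  have "3*l^2 - 2*t*l + s = (l-1)*(2*l - (t-1)) + (l^2 - (t-1)*l + 1)" using True by (simp add: power2_eq_square algebra_simps)
  also have "\<dots> = (l-1)*r"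
  proof -
    have h: "2*l - (t-1) = r" unfolding l_def by (simp add: field_simps)
    show ?thesis by (simp only: h q add_0_right)
  qed
  finally have d0: "3*l^2 - 2*t*l + s \<noteq> 0" using l1 rp by simp
  show ?thesis by (rule exI[of _ l]) (use f0 l1 d0 in simp)
next
  case False
  let ?f = "\<lambda>l::real. l^3 - t*l^2 + s*l - 1"
  have "?f 0 \<le> 0" by simp
  moreover have "0 \<le> ?f (t+1)"
  proof -
    have "?f (t+1) = (t+1)^2 + s*(t+1) - 1" by (simp add: power2_eq_square power3_eq_cube algebra_simps)
    moreover have "(t+1)^2 \<ge> 1" using t3 by (simp add: one_le_power)
    moreover have "s*(t+1) \<ge> 0" using t3 s3 by simp
    ultimately show ?thesis by linarith
  qed
  moreover have "(0::real) \<le> t+1" using t3 by simp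
  moreover have "\<forall>x. 0 \<le> x \<and> x \<le> t+1 \<longrightarrow> isCont ?f x" by (intro allI impI continuous_intros)
  ultimately have "\<exists>x. 0 \<le> x \<and> x \<le> t+1 \<and> ?f x = 0" by (rule IVT)
  then obtain l where fl: "l^3 - t*l^2 + s*l - 1 = 0" by auto
  have l1: "l \<noteq> 1"
  proof
    assume "l = 1" then show False using fl False by simp
  qed
  show ?thesis
  proof (cases "3*l^2 - 2*t*l + s = 0")
    case False then show ?thesis by (intro exI[of _ l]) (use fl l1 in simp)
  next
    case True
    define n where "n = t - 2*l"
    have "n^3 - t*n^2 + s*n - 1 = (n-l)^2*(n-n) + (3*l^2 - 2*t*l + s)*n + ((l^3 - t*l^2 + s*l - 1) - l*(3*l^2 - 2*t*l + s))"
      unfolding n_def by (simp add: power2_eq_square power3_eq_cube algebra_simps)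
    then have fn: "n^3 - t*n^2 + s*n - 1 = 0" using fl True by simp
    have "3*n^2 - 2*t*n + s = (n-l)^2 + (3*l^2 - 2*t*l + s)"
      unfolding n_def by (simp add: power2_eq_square algebra_simps)
    then have dn: "3*n^2 - 2*t*n + s = (n-l)^2" using True by simp
    have nl: "n \<noteq> l"
    proof
      assume "n = l"
      then have "t = 3*l" unfolding n_def by simp
      then have "l^3 - 1 = (l^3 - t*l^2 + s*l - 1) - l*(3*l^2 - 2*t*l + s)"
        by (simp add: power2_eq_square power3_eq_cube algebra_simps)
      then have "l^3 = 1" using fl True by simp
      then show False using l1 cube_eq_1 by blast
    qed
    have n1: "n \<noteq> 1"
    proof
      assume "n = 1" then show False using fn False by simp
    qed
    have d0: "3*n^2 - 2*t*n + s \<noteq> 0" using dn nl by simp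
    show ?thesis by (rule exI[of _ n]) (use fn n1 d0 in simp)
  qed
qed


lemma eig_root:
  assumes ev: "Tm a b c d *v v = m *s v" and nz: "(v$2) \<noteq> 0 \<or> (v$3) \<noteq> 0 \<or> (v$4) \<noteq> 0"
  shows "fpol a b c d m = 0"
proof -
  define t22 where "t22 = 1 + b*d - 2*b*c - a*c + a*b*c*c"
  define t23 where "t23 = -b - a + a*b*c"
  define t24 where "t24 = b"
  define t32 where "t32 = -2*d + c + a*c*d - a*c*c"
  define t33 where "t33 = a*d - a*c"
  define t34 where "t34 = (-1::real)"
  define t42 where "t42 = -d + 2*c - a*c*c"
  define t43 where "t43 = 1 - a*c"
  define t44 where "t44 = (-1::real)"
  have "(t22 - m)*(v$2) + t23*(v$3) + t24*(v$4) = (Tm a b c d *v v)$2 - (m *s v)$2"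
    by (simp add: t22_def t23_def t24_def Tm_def matrix_vector_mult_def sum_4 algebra_simps)
  then have E2: "(t22 - m)*(v$2) + t23*(v$3) + t24*(v$4) = 0" using ev by simp
  have "t32*(v$2) + (t33 - m)*(v$3) + t34*(v$4) = (Tm a b c d *v v)$3 - (m *s v)$3"
    by (simp add: t32_def t33_def t34_def Tm_def matrix_vector_mult_def sum_4 algebra_simps)
  then have E3: "t32*(v$2) + (t33 - m)*(v$3) + t34*(v$4) = 0" using ev by simp
  have "t42*(v$2) + t43*(v$3) + (t44 - m)*(v$4) = (Tm a b c d *v v)$4 - (m *s v)$4"
    by (simp add: t42_def t43_def t44_def Tm_def matrix_vector_mult_def sum_4 algebra_simps)
  then have E4: "t42*(v$2) + t43*(v$3) + (t44 - m)*(v$4) = 0" using ev by simp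
  note cr = cramer3[OF E2 E3 E4]
  have dt: "(t22 - m)*((t33 - m)*(t44 - m) - t34*t43) - t23*(t32*(t44 - m) - t34*t42) + t24*(t32*t43 - (t33 - m)*t42)
     = - fpol a b c d m"
    unfolding t22_def t23_def t24_def t32_def t33_def t34_def t42_def t43_def t44_def fpol_def trp_def s2p_def
    by algebra
  have "fpol a b c d m * (v$2) = 0" "fpol a b c d m * (v$3) = 0" "fpol a b c d m * (v$4) = 0"
    using cr dt by (simp_all add: minus_mult_left[symmetric])
  then show ?thesis using nz by auto
qed

lemma inv_props:
  fixes Q :: "real^4^4"
  assumes "invertible Q"
  shows "Q ** matrix_inv Q = mat 1" "matrix_inv Q ** Q = mat 1"
proof -
  have ex: "\<exists>A'. Q ** A' = mat 1 \<and> A' ** Q = mat 1" using assms unfolding invertible_def by blast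
  have "Q ** matrix_inv Q = mat 1 \<and> matrix_inv Q ** Q = mat 1"
    unfolding matrix_inv_def by (rule someI_ex[OF ex])
  then show "Q ** matrix_inv Q = mat 1" "matrix_inv Q ** Q = mat 1" by simp_all
qed

theorem lemma3p3:
  fixes a1 a2 b3 b4 :: real
  assumes rel: "(a1 + a2) * (b3 + b4) = 3 + a1 * a2 * b3 * b4"
    and inX: "(a1*b4, a1*b3, a2*b3, a2*b4) \<in> Xcomp - {(3,3,3,3)}"
  shows "\<exists>P :: real^4^4. \<exists>l1 l2 l3 :: real.
           invertible P \<and>
           P ** matA a1 a2 ** matrix_inv P = permA \<and>
           P ** (matA a1 a2 ** matC a1 a2 b3 b4) ** matrix_inv P = diag4 l1 l2 l3 \<and>
           l1 > 0 \<and> l2 > 0 \<and> l3 > 0 \<and> l1 \<noteq> 1 \<and> l1 \<noteq> -1"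
proof -
  have pX: "(a1*b4, a1*b3, a2*b3, a2*b4) \<in> Xcomp" and nc: "(a1*b4, a1*b3, a2*b3, a2*b4) \<noteq> (3,3,3,3)"
    using inX by auto
  from comp_bounds[OF pX] have x1: "a1*b3 > 1" and z1: "a2*b4 > 1" by simp_all
  have e1: "a1*b4 + a1*b3 + a2*b3 + a2*b4 = 3 + (a1*b4)*(a2*b3)" using rel by (simp add: algebra_simps)
  have e2: "(a1*b4)*(a2*b3) = (a2*b4)*(a1*b3)" by simp
  note g = tr_s2_gt[OF e1 e2 x1 z1 nc]
  have "trp a1 a2 b3 b4 = a1*b4 + a2*b4 - 2*(a1*b3) - 2*(a2*b3) + (a1*b3)*(a2*b3)"
    by (simp add: trp_def power2_eq_square algebra_simps)
  then have tr3: "trp a1 a2 b3 b4 > 3" using g(1) by linarith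
  have "s2p a1 a2 b3 b4 = a1*b3 + a2*b3 - 2*(a1*b4) - 2*(a2*b4) + (a1*b4)*(a2*b4)"
    by (simp add: s2p_def power2_eq_square algebra_simps)
  then have s23: "s2p a1 a2 b3 b4 > 3" using g(2) by linarith
  have relp0: "relp a1 a2 b3 b4 = 0" using rel by (simp add: relp_def)
  obtain l where fl0: "l^3 - trp a1 a2 b3 b4*l^2 + s2p a1 a2 b3 b4*l - 1 = 0" and l1: "l \<noteq> 1"
     and dl: "3*l^2 - 2*trp a1 a2 b3 b4*l + s2p a1 a2 b3 b4 \<noteq> 0"
    using root_exists[OF tr3 s23] by blast
  have fl: "fpol a1 a2 b3 b4 l = 0" using fl0 by (simp add: fpol_def)
  have fpos: "\<And>m. fpol a1 a2 b3 b4 m = 0 \<Longrightarrow> m > 0"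
    using root_pos[of "trp a1 a2 b3 b4" "s2p a1 a2 b3 b4"] tr3 s23 by (simp add: fpol_def)
  have lpos: "l > 0" using fpos[OF fl] .
  define q1 where "q1 = q1v a1 a2 b3 b4 l"
  define q2 where "q2 = matA a1 a2 *v q1"
  define q3 where "q3 = matA a1 a2 *v q2"
  define T where "T = Tm a1 a2 b3 b4"
  define L where "L = ellv a2 q1"
  have "L - (l-1)*(3*l^2 - 2*trp a1 a2 b3 b4*l + s2p a1 a2 b3 b4) = 0"
    using id_ell[of a2 a1 b3 b4 l] fl relp0 unfolding L_def q1_def by simp
  then have Lnz: "L \<noteq> 0" using l1 dl by simp
  have Tq1: "T *v q1 = l *s q1"
    using idT_1[of a1 a2 b3 b4 l] idT_2[of a1 a2 b3 b4 l] idT_3[of a1 a2 b3 b4 l] idT_4[of a1 a2 b3 b4 l] fl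
    unfolding T_def q1_def by (simp add: vec4_eq)
  define m2 where "m2 = ellv a2 (T *v q2) / L"
  define m3 where "m3 = ellv a2 (T *v q3) / L"
  have Tq2: "T *v q2 = m2 *s q2"
  proof -
    have h: "L * (T *v q2)$i - ellv a2 (T *v q2) * q2$i = 0" if "i \<in> {1,2,3,4}" for i
      using that id_q2_1[of a2 a1 b3 b4 l] id_q2_2[of a2 a1 b3 b4 l] id_q2_3[of a2 a1 b3 b4 l] id_q2_4[of a2 a1 b3 b4 l] fl relp0
      unfolding L_def T_def q2_def q1_def by auto
    have "(T *v q2)$i = m2 * q2$i" if "i \<in> {1,2,3,4}" for i
      using h[OF that] Lnz unfolding m2_def by (simp add: field_simps)
    then show ?thesis by (simp add: vec4_eq)
  qed
  have Tq3: "T *v q3 = m3 *s q3"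
  proof -
    have h: "L * (T *v q3)$i - ellv a2 (T *v q3) * q3$i = 0" if "i \<in> {1,2,3,4}" for i
      using that id_q3_1[of a2 a1 b3 b4 l] id_q3_2[of a2 a1 b3 b4 l] id_q3_3[of a2 a1 b3 b4 l] id_q3_4[of a2 a1 b3 b4 l] fl relp0
      unfolding L_def T_def q3_def q2_def q1_def by auto
    have "(T *v q3)$i = m3 * q3$i" if "i \<in> {1,2,3,4}" for i
      using h[OF that] Lnz unfolding m3_def by (simp add: field_simps)
    then show ?thesis by (simp add: vec4_eq)
  qed
  have ell2: "ellv a2 q2 = L" unfolding q2_def L_def by (rule ell_A)
  have ell3: "ellv a2 q3 = L" unfolding q3_def using ell2 ell_A by metis
  have nz2: "(q2$2) \<noteq> 0 \<or> (q2$3) \<noteq> 0 \<or> (q2$4) \<noteq> 0"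
    using ell2 Lnz by (auto simp: ellv_def)
  have nz3: "(q3$2) \<noteq> 0 \<or> (q3$3) \<noteq> 0 \<or> (q3$4) \<noteq> 0"
    using ell3 Lnz by (auto simp: ellv_def)
  have m2pos: "m2 > 0" using fpos[OF eig_root[OF Tq2[unfolded T_def] nz2]] .
  have m3pos: "m3 > 0" using fpos[OF eig_root[OF Tq3[unfolded T_def] nz3]] .
  have q34: "(q1$3) \<noteq> 0 \<or> (q1$4) \<noteq> 0"
  proof (rule ccontr)
    assume "\<not> ((q1$3) \<noteq> 0 \<or> (q1$4) \<noteq> 0)"
    then have z3: "q1$3 = 0" and z4: "q1$4 = 0" by auto
    have n2: "q1$2 \<noteq> 0" using Lnz z3 z4 unfolding L_def by (simp add: ellv_def)
    have "(T *v q1)$3 = (-2*b4 + b3 + a1*b3*b4 - a1*b3*b3) * q1$2"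
      using z3 z4 by (simp add: T_def Tm_def matrix_vector_mult_def sum_4)
    moreover have "(T *v q1)$3 = 0" using Tq1 z3 by simp
    ultimately have r3: "-2*b4 + b3 + a1*b3*b4 - a1*b3*b3 = 0" using n2 by simp
    have "(T *v q1)$4 = (-b4 + 2*b3 - a1*b3*b3) * q1$2"
      using z3 z4 by (simp add: T_def Tm_def matrix_vector_mult_def sum_4)
    moreover have "(T *v q1)$4 = 0" using Tq1 z4 by simp
    ultimately have r4: "-b4 + 2*b3 - a1*b3*b3 = 0" using n2 by simp
    have "b3 * ((a1*b3)*(a1*b3) - 3*(a1*b3) + 3) = 0"
    proof -
      have b4e: "b4 = 2*b3 - a1*b3*b3" using r4 by simp
      have E: "-2*(2*b3 - a1*b3*b3) + b3 + a1*b3*(2*b3 - a1*b3*b3) - a1*b3*b3 = 0"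
        using r3 unfolding b4e .
      have "b3 * ((a1*b3)*(a1*b3) - 3*(a1*b3) + 3) = -(-2*(2*b3 - a1*b3*b3) + b3 + a1*b3*(2*b3 - a1*b3*b3) - a1*b3*b3)"
        by (simp add: algebra_simps)
      then show ?thesis using E by simp
    qed
    moreover have "b3 \<noteq> 0" using x1 by auto
    moreover have "(a1*b3)*(a1*b3) - 3*(a1*b3) + 3 > 0"
    proof -
      have "4*((a1*b3)*(a1*b3) - 3*(a1*b3) + 3) = (2*(a1*b3)-3)^2 + 3" by (simp add: power2_eq_square algebra_simps)
      moreover have "(2*(a1*b3)-3)^2 + 3 > (0::real)" by (simp add: add_nonneg_pos)
      ultimately show ?thesis by simp
    qed
    ultimately show False by simp
  qed
  define Q where "Q = cols4 q1 q2 q3 e1v"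
  have invQ: "invertible Q"
    unfolding Q_def q3_def q2_def
    by (rule cols4_invertible) (use Lnz q34 in \<open>simp_all add: L_def\<close>)
  have AQ: "matA a1 a2 ** Q = Q ** permA"
  proof -
    have "matA a1 a2 *v q3 = q1" unfolding q3_def q2_def by (rule A3v)
    then show ?thesis unfolding Q_def mult_cols4 cols4_perm A_e1
      by (simp add: q2_def[symmetric] q3_def[symmetric])
  qed
  have TQ: "T ** Q = Q ** diag4 l m2 m3"
    unfolding Q_def mult_cols4 cols4_diag using Tq1 Tq2 Tq3 T_e1 by (simp add: T_def)
  define P where "P = matrix_inv Q"
  note iQ = inv_props[OF invQ]
  have invP: "invertible P" unfolding P_def invertible_def using iQ by blast
  have PinvQ: "matrix_inv P = Q" unfolding P_def by (rule matrix_inv_eqI) (use iQ in simp_all)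
  have PQ: "P ** Q = mat 1" using iQ by (simp add: P_def)
  have eq1: "P ** matA a1 a2 ** matrix_inv P = permA"
  proof -
    have "P ** matA a1 a2 ** matrix_inv P = P ** (matA a1 a2 ** Q)" by (simp add: PinvQ matrix_mul_assoc)
    also have "\<dots> = (P ** Q) ** permA" by (simp add: AQ matrix_mul_assoc)
    also have "\<dots> = permA" by (simp add: PQ matrix_mul_lid)
    finally show ?thesis .
  qed
  have eq2: "P ** (matA a1 a2 ** matC a1 a2 b3 b4) ** matrix_inv P = diag4 l m2 m3"
  proof -
    have "P ** (matA a1 a2 ** matC a1 a2 b3 b4) ** matrix_inv P = P ** (T ** Q)" by (simp add: PinvQ T_eq T_def matrix_mul_assoc)
    also have "\<dots> = (P ** Q) ** diag4 l m2 m3" by (simp add: TQ matrix_mul_assoc)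
    also have "\<dots> = diag4 l m2 m3" by (simp add: PQ matrix_mul_lid)
    finally show ?thesis .
  qed
  show ?thesis
    by (rule exI[of _ P], rule exI[of _ l], rule exI[of _ m2], rule exI[of _ m3])
       (use invP eq1 eq2 lpos m2pos m3pos l1 in simp)
qed

end
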